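(* Let $\mathrm{R}$ be a real closed field, $\mathrm{C}=\mathrm{R}[i]$, let $F/G\in\mathrm{C}(Z)\setminus\{0\}$, $\gamma\in\mathrm{C}\setminus\{0\}$ and let $\Gamma=[x_0,x_1]\times[y_0,y_1]\subset\mathrm{R}^2$ with $x_0<x_1$, $y_0<y_1$. Then $\mathrm{W}(F/G\mid\partial\Gamma)=\mathrm{W}(\gamma F/G\mid\partial\Gamma)$.
   Context: For nonzero $P\in\mathrm{R}[X]$ and $x\in\mathrm{R}$ write uniquely $P=(X-x)^{\mathrm{mult}_x(P)}P_x$ with $P_x(x)\neq0$; for $P,Q\neq0$ set $\mathrm{val}_x(P/Q)=\mathrm{mult}_x(P)-\mathrm{mult}_x(Q)$. For $P,Q\in\mathrm{R}[X]$, $x\in\mathrm{R}$: $\mathrm{Ind}^+_x(P,Q)=\tfrac12\,\mathrm{sign}(P_x(x)Q_x(x))$ and $\mathrm{Ind}^-_x(P,Q)=\tfrac12(-1)^{\mathrm{val}_x(P/Q)}\mathrm{sign}(P_x(x)Q_x(x))$ if $P\ne0$, $Q\neq0$ and $\mathrm{val}_x(P/Q)<0$, and both are $0$ otherwise; $\mathrm{Ind}_x=\mathrm{Ind}^+_x-\mathrm{Ind}^-_x$. For $a<b$, $\mathrm{Ind}_a^b(P,Q)=\mathrm{Ind}_a^+(P,Q)+\sum_{x\in(a,b)}\mathrm{Ind}_x(P,Q)-\mathrm{Ind}_b^-(P,Q)$; $\mathrm{Ind}_a^b=-\mathrm{Ind}_b^a$ if $b<a$, and $\mathrm{Ind}_a^a=0$.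 For $F\in\mathrm{C}[X,Y]$ let $F_{\rm re},F_{\rm im}\in\mathrm{R}[X,Y]$ with $F=F_{\rm re}+iF_{\rm im}$, and $\overline F=F_{\rm re}-iF_{\rm im}$. Define $\mathrm{w}(F\mid\partial\Gamma)=\tfrac12\big(\mathrm{Ind}_{x_0}^{x_1}(F_{\rm re}(T,y_0),F_{\rm im}(T,y_0))+\mathrm{Ind}_{y_0}^{y_1}(F_{\rm re}(x_1,T),F_{\rm im}(x_1,T))+\mathrm{Ind}_{x_1}^{x_0}(F_{\rm re}(T,y_1),F_{\rm im}(T,y_1))+\mathrm{Ind}_{y_1}^{y_0}(F_{\rm re}(x_0,T),F_{\rm im}(x_0,T))\big)$ and $\mathrm{W}(F\mid\partial\Gamma)=\tfrac12\big(\mathrm{w}(F\mid\partial\Gamma)+\mathrm{w}(iF\mid\partial\Gamma)\big)$. $\mathrm{C}[Z]\subset\mathrm{C}[X,Y]$ via $Z=X+iY$. For $F,G\in\mathrm{C}[X,Y]$, $G\neq0$, $\mathrm{W}(F/G\mid\partial\Gamma):=\mathrm{W}(F\overline G\mid\partial\Gamma)$ (independent of the representation). *)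

theory Defs
  imports "HOL-Computational_Algebra.Polynomial"
begin

class real_closed_field = linordered_field +
  assumes nonneg_is_square: "0 \<le> x \<Longrightarrow> \<exists>y. y * y = x"
  assumes odd_degree_root:
    "odd n \<Longrightarrow> c n \<noteq> 0 \<Longrightarrow> \<exists>x. (\<Sum>i\<le>n. c i * x ^ i) = 0"

text \<open>For nonzero P, \<open>order x P\<close> is mult_x(P) and \<open>cofac P x\<close> is P_x,
i.e. P = (X - x)^(mult_x P) * P_x.\<close>

definition cofac :: "'a::field poly \<Rightarrow> 'a \<Rightarrow> 'a poly" where
  "cofac P x = P div [:-x, 1:] ^ order x P"

definition Ind_plus :: "'a::linordered_field poly \<Rightarrow> 'a poly \<Rightarrow> 'a \<Rightarrow> 'a" where
  "Ind_plus P Q x =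
     (if P \<noteq> 0 \<and> Q \<noteq> 0 \<and> int (order x P) - int (order x Q) < 0
      then sgn (poly (cofac P x) x * poly (cofac Q x) x) / 2 else 0)"

definition Ind_minus :: "'a::linordered_field poly \<Rightarrow> 'a poly \<Rightarrow> 'a \<Rightarrow> 'a" where
  "Ind_minus P Q x =
     (if P \<noteq> 0 \<and> Q \<noteq> 0 \<and> int (order x P) - int (order x Q) < 0
      then (-1) ^ nat (int (order x Q) - int (order x P))
             * sgn (poly (cofac P x) x * poly (cofac Q x) x) / 2 else 0)"

definition Ind_pt :: "'a::linordered_field poly \<Rightarrow> 'a poly \<Rightarrow> 'a \<Rightarrow> 'a" where
  "Ind_pt P Q x = Ind_plus P Q x - Ind_minus P Q x"

text \<open>Sum over x in (a,b) of Ind_x (only finitely many nonzero terms).\<close>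
definition Ind_lt :: "'a::linordered_field poly \<Rightarrow> 'a poly \<Rightarrow> 'a \<Rightarrow> 'a \<Rightarrow> 'a" where
  "Ind_lt P Q a b = Ind_plus P Q a
      + (\<Sum>x\<in>{x. a < x \<and> x < b \<and> Ind_pt P Q x \<noteq> 0}. Ind_pt P Q x)
      - Ind_minus P Q b"

definition Ind :: "'a::linordered_field poly \<Rightarrow> 'a poly \<Rightarrow> 'a \<Rightarrow> 'a \<Rightarrow> 'a" where
  "Ind P Q a b = (if a < b then Ind_lt P Q a b
                  else if b < a then - Ind_lt P Q b a else 0)"

text \<open>An element of C = R[i] (or of R[T][i]) is a pair (re, im).\<close>

definition cmul :: "'b::comm_ring \<times> 'b \<Rightarrow> 'b \<times> 'b \<Rightarrow> 'b \<times> 'b" where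
  "cmul z w = (fst z * fst w - snd z * snd w, fst z * snd w + snd z * fst w)"

definition cconj :: "'b::ab_group_add \<times> 'b \<Rightarrow> 'b \<times> 'b" where
  "cconj z = (fst z, - snd z)"

text \<open>\<open>ceval p z\<close>: evaluation of a real polynomial p in R[Z] at a point
z = (u, v) meaning u + i v with u, v in R[T] (Horner scheme).\<close>

definition ceval :: "'a::comm_ring_1 poly \<Rightarrow> 'a poly \<times> 'a poly \<Rightarrow> 'a poly \<times> 'a poly" where
  "ceval p z = fold_coeffs (\<lambda>c acc. ([:c:] + fst (cmul z acc), snd (cmul z acc))) p (0, 0)"

text \<open>A polynomial F in C[Z] is given by a pair (Fa, Fb) of polynomials in R[Z]
with F = Fa + i Fb.  \<open>restr F (u, v)\<close> is the pair (F_re(u, v), F_im(u, v)) in R[T]^2,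
i.e. F_re, F_im in R[X,Y] with X := u, Y := v substituted.\<close>

definition restr :: "'a::comm_ring_1 poly \<times> 'a poly \<Rightarrow> 'a poly \<times> 'a poly \<Rightarrow> 'a poly \<times> 'a poly" where
  "restr F z = (let A = ceval (fst F) z; B = ceval (snd F) z
                in (fst A - snd B, snd A + fst B))"

definition cscale :: "'a::comm_ring_1 \<times> 'a \<Rightarrow> 'a poly \<times> 'a poly \<Rightarrow> 'a poly \<times> 'a poly" where
  "cscale g F = (smult (fst g) (fst F) - smult (snd g) (snd F),
                 smult (fst g) (snd F) + smult (snd g) (fst F))"

text \<open>A bivariate complex polynomial H = H_re + i H_im in C[X,Y] is represented by its
substitution map: H (u, v) = (H_re(u,v), H_im(u,v)) for u, v in R[T].\<close>

definition wnd :: "'a::linordered_field \<Rightarrow> 'a \<Rightarrow> 'a \<Rightarrow> 'a \<Rightarrow>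
    ('a poly \<times> 'a poly \<Rightarrow> 'a poly \<times> 'a poly) \<Rightarrow> 'a" where
  "wnd x0 x1 y0 y1 H =
     (Ind (fst (H ([:0,1:], [:y0:]))) (snd (H ([:0,1:], [:y0:]))) x0 x1
    + Ind (fst (H ([:x1:], [:0,1:]))) (snd (H ([:x1:], [:0,1:]))) y0 y1
    + Ind (fst (H ([:0,1:], [:y1:]))) (snd (H ([:0,1:], [:y1:]))) x1 x0
    + Ind (fst (H ([:x0:], [:0,1:]))) (snd (H ([:x0:], [:0,1:]))) y1 y0) / 2"

definition times_i :: "'b::ab_group_add \<times> 'b \<Rightarrow> 'b \<times> 'b" where
  "times_i z = (- snd z, fst z)"

definition Wnd :: "'a::linordered_field \<Rightarrow> 'a \<Rightarrow> 'a \<Rightarrow> 'a \<Rightarrow>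
    ('a poly \<times> 'a poly \<Rightarrow> 'a poly \<times> 'a poly) \<Rightarrow> 'a" where
  "Wnd x0 x1 y0 y1 H = (wnd x0 x1 y0 y1 H + wnd x0 x1 y0 y1 (\<lambda>z. times_i (H z))) / 2"

text \<open>W(F/G | boundary) := W(F * conj G | boundary), F, G in C[Z].\<close>
definition Wnd_frac :: "'a::linordered_field \<Rightarrow> 'a \<Rightarrow> 'a \<Rightarrow> 'a \<Rightarrow>
    'a poly \<times> 'a poly \<Rightarrow> 'a poly \<times> 'a poly \<Rightarrow> 'a" where
  "Wnd_frac x0 x1 y0 y1 F G =
     Wnd x0 x1 y0 y1 (\<lambda>z. cmul (restr F z) (cconj (restr G z)))"

end

theory Submission
  imports Defs "Jordan_Normal_Form.Char_Poly" "HOL-Library.Function_Algebras"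
begin

section \<open>Complex numbers over an ordered field\<close>

datatype 'a cpx = Cpx (cre: 'a) (cim: 'a)

lemma cpx_eqI: "cre z = cre w \<Longrightarrow> cim z = cim w \<Longrightarrow> z = w"
  by (cases z, cases w) auto

lemma cpx_eq_iff: "z = w \<longleftrightarrow> cre z = cre w \<and> cim z = cim w"
  by (auto intro: cpx_eqI)

instantiation cpx :: (comm_ring_1) comm_ring_1
begin
definition "0 = Cpx 0 0"
definition "1 = Cpx 1 0"
definition "z + w = Cpx (cre z + cre w) (cim z + cim w)"
definition "z - w = Cpx (cre z - cre w) (cim z - cim w)"
definition "- z = Cpx (- cre z) (- cim z)"
definition "z * w = Cpx (cre z * cre w - cim z * cim w) (cre z * cim w + cim z * cre w)"
instance
  by standard (auto simp: zero_cpx_def one_cpx_def plus_cpx_def minus_cpx_def uminus_cpx_def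
      times_cpx_def cpx_eq_iff algebra_simps)
end

lemma cpx_simps [simp]:
  "cre 0 = 0" "cim 0 = 0" "cre 1 = 1" "cim 1 = 0"
  "cre (z + w) = cre z + cre w" "cim (z + w) = cim z + cim w"
  "cre (z - w) = cre z - cre w" "cim (z - w) = cim z - cim w"
  "cre (- z) = - cre z" "cim (- z) = - cim z"
  "cre (z * w) = cre z * cre w - cim z * cim w" "cim (z * w) = cre z * cim w + cim z * cre w"
  by (simp_all add: zero_cpx_def one_cpx_def plus_cpx_def minus_cpx_def uminus_cpx_def times_cpx_def)

instantiation cpx :: (linordered_field) field
begin
definition "inverse z = Cpx (cre z / (cre z * cre z + cim z * cim z)) (- cim z / (cre z * cre z + cim z * cim z))"
definition "z div (w::'a cpx) = z * inverse w"
instance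
proof
  fix z :: "'a cpx"
  assume "z \<noteq> 0"
  then have "cre z \<noteq> 0 \<or> cim z \<noteq> 0" by (auto simp: cpx_eq_iff)
  then have pos: "cre z * cre z + cim z * cim z \<noteq> 0"
    using sum_squares_gt_zero_iff by (metis less_irrefl)
  define N where "N = cre z * cre z + cim z * cim z"
  have N: "N \<noteq> 0" using pos N_def by simp
  have "cre z / N * cre z + cim z / N * cim z = (cre z * cre z + cim z * cim z) / N"
    by (simp add: add_divide_distrib)
  then have 1: "cre z / N * cre z + cim z / N * cim z = 1" using N unfolding N_def by simp
  have 2: "cre z / N * cim z - cim z / N * cre z = 0" by simp
  show "inverse z * z = 1"
    using 1 2 by (simp add: cpx_eq_iff inverse_cpx_def N_def[symmetric])
next
  show "inverse (0::'a cpx) = 0" by (simp add: inverse_cpx_def cpx_eq_iff)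
qed (simp add: divide_cpx_def)
end

definition ofR :: "'a::comm_ring_1 \<Rightarrow> 'a cpx" where "ofR r = Cpx r 0"
definition ii :: "'a::comm_ring_1 cpx" where "ii = Cpx 0 1"
definition cnj :: "'a::comm_ring_1 cpx \<Rightarrow> 'a cpx" where "cnj z = Cpx (cre z) (- cim z)"

lemma cpx_simps2 [simp]:
  "cre (ofR r) = r" "cim (ofR r) = 0" "cre ii = 0" "cim ii = 1"
  "cre (cnj z) = cre z" "cim (cnj z) = - cim z"
  by (simp_all add: ofR_def ii_def cnj_def)

lemma ofR_hom [simp]: "ofR 0 = 0" "ofR 1 = 1" "ofR (a + b) = ofR a + ofR b"
  "ofR (a - b) = ofR a - ofR b" "ofR (- a) = - ofR a" "ofR (a * b) = ofR a * ofR b"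
  by (simp_all add: cpx_eq_iff)

lemma ofR_inj [simp]: "ofR a = ofR b \<longleftrightarrow> a = b" by (simp add: cpx_eq_iff)
lemma ofR_eq_0 [simp]: "ofR a = 0 \<longleftrightarrow> a = 0" by (simp add: cpx_eq_iff)

lemma ii_sq [simp]: "ii * ii = (-1 :: 'a::comm_ring_1 cpx)" by (simp add: cpx_eq_iff)

lemma cnj_hom [simp]: "cnj 0 = 0" "cnj 1 = 1" "cnj (a + b) = cnj a + cnj b"
  "cnj (a - b) = cnj a - cnj b" "cnj (- a) = - cnj a" "cnj (a * b) = cnj a * cnj b"
  "cnj (cnj a) = a" "cnj (ofR r) = ofR r" "cnj ii = - ii"
  by (simp_all add: cpx_eq_iff)

lemma cnj_eq_0 [simp]: "cnj a = 0 \<longleftrightarrow> a = 0" by (simp add: cpx_eq_iff)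

lemma cpx_decomp: "z = ofR (cre z) + ii * ofR (cim z)" by (simp add: cpx_eq_iff)

lemma cre_ofR_mult [simp]: "cre (ofR r * z) = r * cre z" "cim (ofR r * z) = r * cim z"
  by simp_all


section \<open>Generic linear algebra\<close>

context vector_space begin

lemma indep_disjoint_span:
  assumes B: "independent B" and XY: "X \<subseteq> B" "Y \<subseteq> B" "X \<inter> Y = {}"
    and x: "x \<in> span X" "x \<in> span Y"
  shows "x = 0"
proof -
  obtain t r where t: "finite t" "t \<subseteq> X" "x = (\<Sum>a\<in>t. r a *s a)"
    using x(1) unfolding span_explicit by blast
  obtain t' r' where t': "finite t'" "t' \<subseteq> Y" "x = (\<Sum>a\<in>t'. r' a *s a)"
    using x(2) unfolding span_explicit by blast
  define w where "w a = (if a \<in> t then r a else - r' a)" for a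
  have dis: "t \<inter> t' = {}" using t t' XY by blast
  have "(\<Sum>a\<in>t \<union> t'. w a *s a) = (\<Sum>a\<in>t. w a *s a) + (\<Sum>a\<in>t'. w a *s a)"
    using dis t t' by (simp add: sum.union_disjoint)
  also have "(\<Sum>a\<in>t. w a *s a) = (\<Sum>a\<in>t. r a *s a)" by (rule sum.cong) (auto simp: w_def)
  also have "(\<Sum>a\<in>t'. w a *s a) = (\<Sum>a\<in>t'. - (r' a *s a))"
    using dis by (intro sum.cong) (auto simp: w_def)
  also have "\<dots> = - x" using t' by (simp add: sum_negf)
  finally have "(\<Sum>a\<in>t \<union> t'. w a *s a) = 0" using t by simp
  moreover have "t \<union> t' \<subseteq> B" using t t' XY by blast
  ultimately have "\<forall>a\<in>t. w a = 0"
    using independentD[OF B, of "t \<union> t'" w] t t' by blast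
  then have "\<forall>a\<in>t. r a = 0" by (auto simp: w_def)
  then show ?thesis using t by simp
qed

lemma finite_basis_of:
  assumes "finite B0" "S \<subseteq> span B0" "independent B" "B \<subseteq> S"
  shows "finite B"
  using independent_span_bound[OF assms(1) assms(3)] assms(2,4) by blast

lemma dim_pos:
  assumes "finite B0" "T \<subseteq> span B0" "x \<in> T" "x \<noteq> 0"
  shows "dim T \<ge> 1"
proof (rule ccontr)
  assume "\<not> dim T \<ge> 1"
  then have d0: "dim T = 0" by simp
  obtain B where B: "B \<subseteq> T" "independent B" "T \<subseteq> span B" "card B = dim T"
    by (rule basis_exists)
  have "finite B" using finite_basis_of[OF assms(1,2) B(2,1)] .
  then have "B = {}" using B(4) d0 by simp
  then show False using B(3) assms(3,4) by auto
qed

lemma rank_nullity: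
  assumes lin: "Vector_Spaces.linear scale scale h" and S: "subspace S" and fin: "finite B0" "S \<subseteq> span B0"
  shows "dim S = dim {x\<in>S. h x = 0} + dim (h ` S)"
proof -
  interpret h: Vector_Spaces.linear scale scale h by fact
  let ?K = "{x\<in>S. h x = 0}"
  obtain BK where BK: "BK \<subseteq> ?K" "independent BK" "?K \<subseteq> span BK" "card BK = dim ?K"
    by (rule basis_exists)
  obtain B where B: "BK \<subseteq> B" "B \<subseteq> S" "independent B" "S \<subseteq> span B"
    using maximal_independent_subset_extend[of BK S] BK by blast
  have finB: "finite B" using finite_basis_of[OF fin B(3,2)] .
  have dimS: "dim S = card B" using basis_card_eq_dim[OF B(2) B(4) B(3)] by simp
  let ?C = "B - BK"
  have spanC: "span ?C \<subseteq> S" using B(2) S by (intro span_minimal) auto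
  have inj0: "x = 0" if "x \<in> span ?C" "h x = 0" for x
  proof -
    have "x \<in> ?K" using that spanC by auto
    then have "x \<in> span BK" using BK(3) by auto
    then show ?thesis using indep_disjoint_span[OF B(3), of ?C BK x] B(1) that(1) by auto
  qed
  have injC: "inj_on h (span ?C)"
    using h.inj_on_iff_eq_0[OF subspace_span] inj0 by auto
  have indC0: "independent ?C" using B(3) independent_mono by blast
  have indC: "independent (h ` ?C)"
    using h.independent_injective_image[OF indC0 injC] .
  have cardhC: "card (h ` ?C) = card ?C"
    using card_image[OF inj_on_subset[OF injC span_superset]] .
  have "h ` S \<subseteq> h ` span B" using B(4) by auto
  also have "\<dots> = span (h ` B)" using h.span_image by simp
  also have "\<dots> \<subseteq> span (h ` ?C)"
  proof (rule span_minimal)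
    show "h ` B \<subseteq> span (h ` ?C)"
    proof
      fix y assume "y \<in> h ` B"
      then obtain b where b: "b \<in> B" "y = h b" by auto
      show "y \<in> span (h ` ?C)"
      proof (cases "b \<in> BK")
        case True
        then have "h b = 0" using BK(1) by auto
        then show ?thesis using b span_zero by simp
      next
        case False
        then show ?thesis using b by (intro span_base) auto
      qed
    qed
  qed simp
  finally have hS: "h ` S \<subseteq> span (h ` ?C)" .
  have hCS: "h ` ?C \<subseteq> h ` S" using B(2) by auto
  have "dim (h ` S) = card (h ` ?C)"
    using basis_card_eq_dim[OF hCS hS indC] by simp
  moreover have "card B = card BK + card ?C"
    using finB B(1) by (metis card_Diff_subset card_mono finite_subset le_add_diff_inverse)
  ultimately show ?thesis using dimS BK(4) cardhC by simp
qed

lemma linear_sub_scale: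
  assumes "Vector_Spaces.linear scale scale f"
  shows "Vector_Spaces.linear scale scale (\<lambda>x. f x - scale l x)"
proof -
  interpret f: Vector_Spaces.linear scale scale f by fact
  show ?thesis
    unfolding Vector_Spaces.linear_iff
  proof (intro conjI allI)
    show "vector_space scale" by (rule vector_space_axioms)
    show "vector_space scale" by (rule vector_space_axioms)
    fix x y show "f (x + y) - scale l (x + y) = (f x - scale l x) + (f y - scale l y)"
      by (simp add: f.add scale_right_distrib)
  next
    fix c x show "f (scale c x) - scale l (scale c x) = scale c (f x - scale l x)"
      by (simp add: f.scale scale_right_diff_distrib mult.commute)
  qed
qed

lemma common_eigen:
  assumes fin: "finite B0"
    and hyp: "\<And>T h. subspace T \<Longrightarrow> T \<subseteq> span B0 \<Longrightarrow> \<not> d dvd dim T \<Longrightarrow> Vector_Spaces.linear scale scale h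
              \<Longrightarrow> h ` T \<subseteq> T \<Longrightarrow> \<exists>v\<in>T. v \<noteq> 0 \<and> (\<exists>l. h v = scale l v)"
  shows "subspace S \<Longrightarrow> S \<subseteq> span B0 \<Longrightarrow> \<not> d dvd dim S \<Longrightarrow> Vector_Spaces.linear scale scale f
    \<Longrightarrow> Vector_Spaces.linear scale scale g \<Longrightarrow> f ` S \<subseteq> S \<Longrightarrow> g ` S \<subseteq> S \<Longrightarrow> (\<forall>x\<in>S. f (g x) = g (f x))
    \<Longrightarrow> \<exists>v\<in>S. v \<noteq> 0 \<and> (\<exists>a. f v = scale a v) \<and> (\<exists>b. g v = scale b v)"
proof (induction "dim S" arbitrary: S rule: less_induct)
  case less
  note S = less.prems
  interpret f: Vector_Spaces.linear scale scale f by fact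
  interpret g: Vector_Spaces.linear scale scale g by fact
  obtain v0 l where v0: "v0 \<in> S" "v0 \<noteq> 0" "f v0 = scale l v0"
    using hyp[OF S(1,2,3,4,6)] by blast
  define h where "h x = f x - scale l x" for x
  have linh: "Vector_Spaces.linear scale scale h" unfolding h_def by (rule linear_sub_scale) fact
  interpret h: Vector_Spaces.linear scale scale h by fact
  let ?W = "{x\<in>S. h x = 0}"
  let ?U = "h ` S"
  have subW: "subspace ?W"
  proof -
    have "?W = S \<inter> {x. h x = 0}" by auto
    then show ?thesis using subspace_inter[OF S(1) h.subspace_kernel] by simp
  qed
  have subU: "subspace ?U" using h.subspace_image[OF S(1)] .
  have US: "?U \<subseteq> S"
  proof
    fix y assume "y \<in> ?U"
    then obtain x where x: "x \<in> S" "y = h x" by auto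
    have "f x \<in> S" using x S(6) by auto
    then show "y \<in> S" unfolding x(2) h_def using subspace_diff[OF S(1)] subspace_scale[OF S(1) x(1)] by blast
  qed
  have WS: "?W \<subseteq> S" by auto
  have dims: "dim S = dim ?W + dim ?U" using rank_nullity[OF linh S(1) fin S(2)] .
  have fW: "f ` ?W \<subseteq> ?W"
  proof safe
    fix x assume x: "x \<in> S" "h x = 0"
    then have fx: "f x = scale l x" by (simp add: h_def)
    show "f x \<in> S" using x S(6) by auto
    show "h (f x) = 0" unfolding h_def fx f.scale by simp
  qed
  have gW: "g ` ?W \<subseteq> ?W"
  proof safe
    fix x assume x: "x \<in> S" "h x = 0"
    then have fx: "f x = scale l x" by (simp add: h_def)
    show "g x \<in> S" using x S(7) by auto
    show "h (g x) = 0" unfolding h_def using S(8) x fx g.scale by simp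
  qed
  have fU: "f ` ?U \<subseteq> ?U"
  proof safe
    fix x assume x: "x \<in> S"
    have "f (h x) = h (f x)" by (simp add: h_def f.diff f.scale)
    then show "f (h x) \<in> ?U" using x S(6) by auto
  qed
  have gU: "g ` ?U \<subseteq> ?U"
  proof safe
    fix x assume x: "x \<in> S"
    have "g (h x) = h (g x)" using S(8) x by (simp add: h_def g.diff g.scale)
    then show "g (h x) \<in> ?U" using x S(7) by auto
  qed
  show ?case
  proof (cases "\<forall>x\<in>S. h x = 0")
    case True
    obtain v b where v: "v \<in> S" "v \<noteq> 0" "g v = scale b v"
      using hyp[OF S(1,2,3,5,7)] by blast
    have "f v = scale l v" using True v(1) by (simp add: h_def)
    then show ?thesis using v by blast
  next
    case False
    then obtain x where x: "x \<in> S" "h x \<noteq> 0" by blast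
    have dU: "dim ?U \<ge> 1" using dim_pos[OF fin, of ?U "h x"] x US S(2) by auto
    have dW: "dim ?W \<ge> 1" using dim_pos[OF fin, of ?W v0] v0 S(2) by (auto simp: h_def)
    have ltW: "dim ?W < dim S" and ltU: "dim ?U < dim S" using dims dU dW by linarith+
    have "\<not> d dvd dim ?W \<or> \<not> d dvd dim ?U" using S(3) dims dvd_add by metis
    then show ?thesis
    proof
      assume nd: "\<not> d dvd dim ?W"
      have "\<exists>v\<in>?W. v \<noteq> 0 \<and> (\<exists>a. f v = scale a v) \<and> (\<exists>b. g v = scale b v)"
        by (rule less.hyps[OF ltW subW _ nd S(4,5) fW gW]) (use S(2,8) WS in auto)
      then show ?thesis using WS by blast
    next
      assume nd: "\<not> d dvd dim ?U"
      have "\<exists>v\<in>?U. v \<noteq> 0 \<and> (\<exists>a. f v = scale a v) \<and> (\<exists>b. g v = scale b v)"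
        by (rule less.hyps[OF ltU subU _ nd S(4,5) fU gU]) (use S(2,8) US in auto)
      then show ?thesis using US by blast
    qed
  qed
qed


lemma eigen_from_mat:
  assumes S: "subspace S" and fin: "finite B0" "S \<subseteq> span B0"
    and lin: "Vector_Spaces.linear scale scale h" and hS: "h ` S \<subseteq> S"
    and mat: "\<And>A::'a mat. A \<in> carrier_mat (dim S) (dim S) \<Longrightarrow> \<exists>l. eigenvalue A l"
  shows "\<exists>v\<in>S. v \<noteq> 0 \<and> (\<exists>l. h v = scale l v)"
proof -
  interpret h: Vector_Spaces.linear scale scale h by fact
  obtain B where B: "B \<subseteq> S" "independent B" "S \<subseteq> span B" "card B = dim S"
    by (rule basis_exists)
  have finB: "finite B" using finite_basis_of[OF fin B(2,1)] .
  obtain bl where bl: "set bl = B" "distinct bl" using finite_distinct_list[OF finB] by blast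
  define m where "m = dim S"
  have len: "length bl = m" using distinct_card[OF bl(2)] bl(1) B(4) m_def by simp
  have injbl: "inj_on (\<lambda>i. bl ! i) {..<m}"
    using bl(2) len by (auto simp: inj_on_def nth_eq_iff_index_eq)
  have Bim: "B = (\<lambda>i. bl ! i) ` {..<m}" using bl(1) len by (auto simp: in_set_conv_nth)
  have reidx: "(\<Sum>b\<in>B. F b) = (\<Sum>i<m. F (bl ! i))" for F :: "'b \<Rightarrow> 'c::comm_monoid_add"
    unfolding Bim by (rule sum.reindex[OF injbl, unfolded comp_def])
  have blB: "bl ! i \<in> B" if "i < m" for i using that len bl(1) by auto
  have repr: "v = (\<Sum>i<m. scale (representation B v (bl!i)) (bl!i))" if "v \<in> span B" for v
    using sum_representation_eq[OF B(2) that finB subset_refl]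
      reidx[of "\<lambda>b. scale (representation B v b) b"] by simp
  define A where "A = mat m m (\<lambda>(i,j). representation B (h (bl!j)) (bl!i))"
  have Acar: "A \<in> carrier_mat m m" unfolding A_def by simp
  obtain l where "eigenvalue A l" using mat Acar m_def by blast
  then obtain u where u: "u \<in> carrier_vec m" "u \<noteq> 0\<^sub>v m" "A *\<^sub>v u = l \<cdot>\<^sub>v u"
    unfolding eigenvalue_def eigenvector_def using Acar by auto
  define x where "x = (\<Sum>j<m. scale (u $ j) (bl ! j))"
  have xS: "x \<in> S" unfolding x_def
    by (rule subspace_sum[OF S]) (use subspace_scale[OF S] blB B(1) in blast)
  have hb: "h (bl!j) = (\<Sum>i<m. scale (A $$ (i,j)) (bl!i))" if j: "j < m" for j
  proof -
    have "h (bl!j) \<in> span B" using hS B(1,3) blB[OF j] by blast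
    then have "h (bl!j) = (\<Sum>i<m. scale (representation B (h (bl!j)) (bl!i)) (bl!i))" by (rule repr)
    also have "\<dots> = (\<Sum>i<m. scale (A $$ (i,j)) (bl!i))"
      by (rule sum.cong) (auto simp: A_def j)
    finally show ?thesis .
  qed
  have Au: "(\<Sum>j<m. A $$ (i,j) * u $ j) = l * u $ i" if i: "i < m" for i
  proof -
    have "(A *\<^sub>v u) $ i = (\<Sum>j<m. A $$ (i,j) * u $ j)"
      using Acar u(1) i by (auto simp: scalar_prod_def lessThan_atLeast0)
    then show ?thesis using u(3) u(1) i by simp
  qed
  have "h x = (\<Sum>j<m. scale (u $ j) (h (bl ! j)))" unfolding x_def by (simp add: h.sum h.scale)
  also have "\<dots> = (\<Sum>j<m. \<Sum>i<m. scale (A $$ (i,j) * u $ j) (bl!i))"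
    by (rule sum.cong) (auto simp: hb scale_sum_right mult.commute)
  also have "\<dots> = (\<Sum>i<m. \<Sum>j<m. scale (A $$ (i,j) * u $ j) (bl!i))" by (rule sum.swap)
  also have "\<dots> = (\<Sum>i<m. scale (l * u $ i) (bl!i))"
    by (rule sum.cong) (auto simp: scale_sum_left[symmetric] Au)
  also have "\<dots> = scale l x" unfolding x_def by (simp add: scale_sum_right)
  finally have hx: "h x = scale l x" .
  have "x \<noteq> 0"
  proof
    assume x0: "x = 0"
    define w where "w b = u $ (the_inv_into {..<m} (\<lambda>i. bl ! i) b)" for b
    have wbl: "w (bl ! i) = u $ i" if "i < m" for i
      unfolding w_def using the_inv_into_f_f[OF injbl] that by simp
    have "(\<Sum>b\<in>B. scale (w b) b) = x" unfolding reidx x_def by (rule sum.cong) (auto simp: wbl)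
    then have "(\<Sum>b\<in>B. scale (w b) b) = 0" using x0 by simp
    then have "\<forall>b\<in>B. w b = 0" using independentD[OF B(2) finB subset_refl] by blast
    then have "\<forall>i<m. u $ i = 0" using wbl blB by fastforce
    then have "u = 0\<^sub>v m" using u(1) by (intro eq_vecI) auto
    then show False using u(2) by simp
  qed
  then show ?thesis using xS hx by blast
qed

end


section \<open>Function spaces\<close>

definition fsc :: "'k::field \<Rightarrow> ('i \<Rightarrow> 'k) \<Rightarrow> ('i \<Rightarrow> 'k)" where
  "fsc c x = (\<lambda>i. c * x i)"

interpretation fv: vector_space "fsc :: 'k::field \<Rightarrow> ('i \<Rightarrow> 'k) \<Rightarrow> ('i \<Rightarrow> 'k)"
  by unfold_locales (auto simp: fsc_def algebra_simps)

lemma fsc_apply [simp]: "fsc c x i = c * x i" by (simp add: fsc_def)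

lemma sum_fun_apply: "(\<Sum>a\<in>A. f a) x = (\<Sum>a\<in>A. f a x)"
  by (induct A rule: infinite_finite_induct) auto

definition FunI :: "'i set \<Rightarrow> ('i \<Rightarrow> 'k::zero) set" where
  "FunI I = {x. \<forall>i. i \<notin> I \<longrightarrow> x i = 0}"

definition delta :: "'i \<Rightarrow> 'i \<Rightarrow> 'k::{zero,one}" where
  "delta i = (\<lambda>j. if j = i then 1 else 0)"

lemma subspace_FunI: "fv.subspace (FunI I :: ('i \<Rightarrow> 'k::field) set)"
  unfolding fv.subspace_def FunI_def by auto

lemma FunI_expand:
  fixes x :: "'i \<Rightarrow> 'k::field"
  assumes "finite I" "x \<in> FunI I"
  shows "x = (\<Sum>i\<in>I. fsc (x i) (delta i))"
proof
  fix j
  show "x j = (\<Sum>i\<in>I. fsc (x i) (delta i)) j"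
  proof (cases "j \<in> I")
    case True
    have "(\<Sum>i\<in>I. fsc (x i) (delta i)) j = (\<Sum>i\<in>I. x i * delta i j)" by (simp add: sum_fun_apply)
    also have "\<dots> = x j * delta j j + (\<Sum>i\<in>I - {j}. x i * delta i j)"
      by (rule sum.remove[OF assms(1) True])
    also have "(\<Sum>i\<in>I - {j}. x i * delta i j) = 0"
      by (rule sum.neutral) (auto simp: delta_def)
    finally have "(\<Sum>i\<in>I. fsc (x i) (delta i)) j = x j * delta j j" by (simp add: fsc_def)
    then show ?thesis by (simp add: delta_def)
  next
    case False
    then have "x j = 0" using assms(2) by (auto simp: FunI_def)
    moreover have "(\<Sum>i\<in>I. fsc (x i) (delta i)) j = 0"
      using False by (auto simp: sum_fun_apply delta_def intro!: sum.neutral)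
    ultimately show ?thesis by simp
  qed
qed

lemma FunI_span:
  assumes "finite I"
  shows "(FunI I :: ('i \<Rightarrow> 'k::field) set) \<subseteq> fv.span (delta ` I)"
proof
  fix x :: "'i \<Rightarrow> 'k" assume x: "x \<in> FunI I"
  show "x \<in> fv.span (delta ` I)"
  proof (subst FunI_expand[OF assms x], rule fv.span_sum)
    fix i assume "i \<in> I"
    then show "fsc (x i) (delta i) \<in> fv.span (delta ` I)"
      by (intro fv.span_scale fv.span_base) auto
  qed
qed

lemma delta_inj: "inj (delta :: 'i \<Rightarrow> 'i \<Rightarrow> 'k::{zero_neq_one})"
proof
  fix i j :: 'i assume "delta i = (delta j :: 'i \<Rightarrow> 'k)"
  then have "delta i i = (delta j i :: 'k)" by simp
  then show "i = j" by (auto simp: delta_def split: if_splits)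
qed

lemma delta_indep: "fv.independent (delta ` I :: ('i \<Rightarrow> 'k::field) set)"
  unfolding fv.independent_explicit_module
proof (intro allI impI)
  fix t u v
  assume t: "finite t" "t \<subseteq> delta ` I" and s: "(\<Sum>v\<in>t. fsc (u v) v) = (0 :: 'i \<Rightarrow> 'k)" and v: "v \<in> t"
  obtain i where i: "v = delta i" using t v by auto
  have "0 = (\<Sum>w\<in>t. fsc (u w) w) i" using s by simp
  also have "\<dots> = (\<Sum>w\<in>t. u w * w i)" by (simp add: sum_fun_apply)
  also have "\<dots> = u v * v i + (\<Sum>w\<in>t - {v}. u w * w i)"
    by (rule sum.remove[OF t(1) v])
  also have "(\<Sum>w\<in>t - {v}. u w * w i) = 0"
    proof (rule sum.neutral, rule ballI)
      fix w assume "w \<in> t - {v}"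
      then have w: "w \<in> t" "w \<noteq> v" by auto
      then obtain k where k: "w = delta k" using t by auto
      then have "k \<noteq> i" using w i by auto
      then show "u w * w i = 0" using k by (simp add: delta_def)
    qed
  finally show "u v = 0" using i by (simp add: delta_def)
qed

lemma dim_FunI:
  assumes "finite I"
  shows "fv.dim (FunI I :: ('i \<Rightarrow> 'k::field) set) = card I"
proof (rule fv.dim_unique)
  show "delta ` I \<subseteq> (FunI I :: ('i \<Rightarrow> 'k) set)" by (auto simp: FunI_def delta_def)
  show "FunI I \<subseteq> fv.span (delta ` I :: ('i \<Rightarrow> 'k) set)" by (rule FunI_span[OF assms])
  show "fv.independent (delta ` I :: ('i \<Rightarrow> 'k) set)" by (rule delta_indep)
  show "card (delta ` I :: ('i \<Rightarrow> 'k) set) = card I"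
    by (rule card_image) (rule inj_on_subset[OF delta_inj], simp)
qed

section \<open>Eigenvalues: the real odd case\<close>

definition EV :: "'k::field itself \<Rightarrow> nat \<Rightarrow> bool" where
  "EV _ m \<longleftrightarrow> (\<forall>A::'k mat. A \<in> carrier_mat m m \<longrightarrow> (\<exists>l. eigenvalue A l))"

lemma odd_poly_root:
  fixes p :: "'a::real_closed_field poly"
  assumes "odd (degree p)"
  shows "\<exists>x. poly p x = 0"
proof -
  have "degree p \<noteq> 0" using odd_pos[OF assms] by simp
  then have "coeff p (degree p) \<noteq> 0" by auto
  then obtain x where "(\<Sum>i\<le>degree p. coeff p i * x ^ i) = 0"
    using odd_degree_root[OF assms] by blast
  then show ?thesis by (auto simp: poly_altdef)
qed

lemma EV_real_odd:
  assumes "odd m"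
  shows "EV TYPE('a::real_closed_field) m"
  unfolding EV_def
proof (intro allI impI)
  fix A :: "'a mat" assume A: "A \<in> carrier_mat m m"
  have "degree (char_poly A) = m" using degree_monic_char_poly[OF A] by simp
  then obtain x where "poly (char_poly A) x = 0" using odd_poly_root assms by metis
  then show "\<exists>l. eigenvalue A l" using eigenvalue_root_char_poly[OF A] by blast
qed


definition mm :: "nat \<Rightarrow> (nat \<times> nat \<Rightarrow> 'k::comm_ring_1) \<Rightarrow> (nat \<times> nat \<Rightarrow> 'k) \<Rightarrow> (nat \<times> nat \<Rightarrow> 'k)" where
  "mm n X Y = (\<lambda>(i,j). \<Sum>k<n. X (i,k) * Y (k,j))"

lemma mm_apply: "mm n X Y (i,j) = (\<Sum>k<n. X (i,k) * Y (k,j))" by (simp add: mm_def)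

lemma mm_add_right: "mm n X (Y + Z) = mm n X Y + mm n X Z"
  by (auto simp: mm_def sum.distrib algebra_simps)
lemma mm_add_left: "mm n (X + Y) Z = mm n X Z + mm n Y Z"
  by (auto simp: mm_def sum.distrib algebra_simps)
lemma mm_diff_right: "mm n X (Y - Z) = mm n X Y - mm n X Z"
  by (auto simp: mm_def sum_subtractf algebra_simps)
lemma mm_diff_left: "mm n (X - Y) Z = mm n X Z - mm n Y Z"
  by (auto simp: mm_def sum_subtractf algebra_simps)
lemma mm_fsc_left: "mm n (fsc c X) Y = fsc c (mm n X Y)"
  by (auto simp: mm_def sum_distrib_left algebra_simps fsc_def)
lemma mm_fsc_right: "mm n X (fsc c Y) = fsc c (mm n X Y)"
  by (auto simp: mm_def sum_distrib_left algebra_simps fsc_def)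
lemma mm_assoc: "mm n (mm n X Y) Z = mm n X (mm n Y Z)"
proof -
  have "(\<Sum>k<n. (\<Sum>l<n. X (i,l) * Y (l,k)) * Z (k,j)) = (\<Sum>l<n. X (i,l) * (\<Sum>k<n. Y (l,k) * Z (k,j)))"
    for i j
    by (simp add: sum_distrib_left sum_distrib_right mult.assoc) (rule sum.swap)
  then show ?thesis by (auto simp: mm_def)
qed

lemmas mm_simps = mm_add_right mm_add_left mm_diff_right mm_diff_left mm_fsc_left mm_fsc_right mm_assoc
  fv.scale_right_distrib fv.scale_right_diff_distrib

definition trn :: "(nat \<times> nat \<Rightarrow> 'k) \<Rightarrow> (nat \<times> nat \<Rightarrow> 'k)" where
  "trn X = (\<lambda>(i,j). X (j,i))"

lemma trn_apply [simp]: "trn X (i,j) = X (j,i)" by (simp add: trn_def)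

lemma trn_mm: "trn (mm n X Y) = mm n (trn Y) (trn X)"
  by (auto simp: mm_def trn_def mult.commute)

definition adj :: "(nat \<times> nat \<Rightarrow> 'k::comm_ring_1 cpx) \<Rightarrow> (nat \<times> nat \<Rightarrow> 'k cpx)" where
  "adj X = (\<lambda>(i,j). cnj (X (j,i)))"

lemma adj_apply [simp]: "adj X (i,j) = cnj (X (j,i))" by (simp add: adj_def)

lemma cnj_sum: "cnj (\<Sum>a\<in>A. f a) = (\<Sum>a\<in>A. cnj (f a))"
  by (induct A rule: infinite_finite_induct) auto

lemma adj_mm: "adj (mm n X Y) = mm n (adj Y) (adj X)"
  by (auto simp: mm_def adj_def cnj_sum mult.commute)
lemma adj_adj [simp]: "adj (adj X) = X" by (auto simp: adj_def)
lemma adj_add: "adj (X + Y) = adj X + adj Y" by (auto simp: adj_def)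
lemma adj_diff: "adj (X - Y) = adj X - adj Y" by (auto simp: adj_def)
lemma adj_fsc: "adj (fsc c X) = fsc (cnj c) (adj X)" by (auto simp: adj_def fsc_def)

definition supp :: "nat \<Rightarrow> (nat \<times> nat \<Rightarrow> 'k::zero) \<Rightarrow> bool" where
  "supp n X \<longleftrightarrow> (\<forall>i j. \<not> (i < n \<and> j < n) \<longrightarrow> X (i,j) = 0)"

lemma supp_mm: "supp n X \<Longrightarrow> supp n Y \<Longrightarrow> supp n (mm n X Y)"
  by (auto simp: supp_def mm_def intro!: sum.neutral)
lemma supp_add: "supp n (X::nat\<times>nat\<Rightarrow>'k::comm_ring_1) \<Longrightarrow> supp n Y \<Longrightarrow> supp n (X + Y)" by (auto simp: supp_def)
lemma supp_diff: "supp n (X::nat\<times>nat\<Rightarrow>'k::comm_ring_1) \<Longrightarrow> supp n Y \<Longrightarrow> supp n (X - Y)" by (auto simp: supp_def)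
lemma supp_fsc: "supp n X \<Longrightarrow> supp n (fsc c X)" by (auto simp: supp_def)

definition ofmat :: "nat \<Rightarrow> 'k::zero mat \<Rightarrow> (nat \<times> nat \<Rightarrow> 'k)" where
  "ofmat n A = (\<lambda>(i,j). if i < n \<and> j < n then A $$ (i,j) else 0)"

lemma supp_ofmat: "supp n (ofmat n A)" by (auto simp: supp_def ofmat_def)

lemma eigen_from_fun:
  fixes A :: "'k::field mat"
  assumes A: "A \<in> carrier_mat n n" and X: "supp n X" "X \<noteq> 0"
    and eq: "mm n (ofmat n A) X = fsc mu X"
  shows "eigenvalue A mu"
proof -
  obtain i j where ij: "X (i,j) \<noteq> 0" using X(2) by (metis ext surj_pair zero_fun_def)
  then have ij': "i < n" "j < n" using X(1) by (auto simp: supp_def)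
  define v where "v = vec n (\<lambda>k. X (k,j))"
  have v: "v \<in> carrier_vec n" unfolding v_def by simp
  have "v \<noteq> 0\<^sub>v n" using ij ij' unfolding v_def by (metis index_vec index_zero_vec(1))
  moreover have "A *\<^sub>v v = mu \<cdot>\<^sub>v v"
  proof (rule eq_vecI)
    fix k assume k: "k < dim_vec (mu \<cdot>\<^sub>v v)"
    then have k': "k < n" using v by simp
    have "(A *\<^sub>v v) $ k = (\<Sum>l<n. A $$ (k,l) * X (l,j))"
      using A k' by (auto simp: scalar_prod_def v_def lessThan_atLeast0)
    also have "\<dots> = mm n (ofmat n A) X (k,j)"
      using k' by (auto simp: mm_def ofmat_def intro!: sum.cong)
    also have "\<dots> = mu * X (k,j)" using eq by (simp add: fsc_def)
    finally show "(A *\<^sub>v v) $ k = (mu \<cdot>\<^sub>v v) $ k" using k' by (simp add: v_def)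
  qed (use A v in simp)
  ultimately show ?thesis unfolding eigenvalue_def eigenvector_def using A v by auto
qed


section \<open>Complex matrices of odd size\<close>

definition hdec :: "nat \<Rightarrow> (nat \<times> nat \<Rightarrow> 'a::linordered_field) \<Rightarrow> (nat \<times> nat \<Rightarrow> 'a cpx)" where
  "hdec n x = (\<lambda>(i,j). if i < n \<and> j < n then
     (if i = j then ofR (x (i,i)) else if i < j then Cpx (x (i,j)) (x (j,i)) else Cpx (x (j,i)) (- x (i,j)))
     else 0)"

definition henc :: "nat \<Rightarrow> (nat \<times> nat \<Rightarrow> 'a::linordered_field cpx) \<Rightarrow> (nat \<times> nat \<Rightarrow> 'a)" where
  "henc n X = (\<lambda>(i,j). if i < n \<and> j < n then (if i \<le> j then cre (X (i,j)) else cim (X (j,i))) else 0)"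

definition herm :: "nat \<Rightarrow> (nat \<times> nat \<Rightarrow> 'a::linordered_field cpx) \<Rightarrow> bool" where
  "herm n X \<longleftrightarrow> supp n X \<and> adj X = X"

lemma hdec_herm: "herm n (hdec n x)"
  unfolding herm_def supp_def
  by (auto simp: hdec_def adj_def cpx_eq_iff fun_eq_iff)

lemma cim_diag_herm: "herm n X \<Longrightarrow> cim (X (i,i)) = 0"
proof -
  assume "herm n X"
  then have "adj X (i,i) = X (i,i)" unfolding herm_def by simp
  then have "cim (X (i,i)) = - cim (X (i,i))" by (simp add: cpx_eq_iff)
  then show ?thesis by simp
qed

lemma hdec_henc: assumes "herm n X" shows "hdec n (henc n X) = X"
proof
  fix p :: "nat \<times> nat"
  obtain i j where p: "p = (i,j)" by (cases p)
  have s: "supp n X" and a: "\<And>i j. cnj (X (j,i)) = X (i,j)"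
    using assms unfolding herm_def by (auto simp: fun_eq_iff adj_def)
  have d: "cim (X (i,i)) = 0" using cim_diag_herm[OF assms] .
  show "hdec n (henc n X) p = X p"
  proof (cases "i < n \<and> j < n")
    case True
    then show ?thesis unfolding p using d a[of i j]
      by (auto simp: hdec_def henc_def cpx_eq_iff)
  next
    case False
    then show ?thesis unfolding p using s by (auto simp: hdec_def supp_def)
  qed
qed

abbreviation "sqI n \<equiv> {..<n} \<times> {..<n}"

lemma henc_hdec: assumes "x \<in> FunI (sqI n)" shows "henc n (hdec n x) = x"
proof
  fix p :: "nat \<times> nat"
  obtain i j where p: "p = (i,j)" by (cases p)
  show "henc n (hdec n x) p = x p"
    using assms unfolding p by (auto simp: hdec_def henc_def FunI_def)
qed

lemma henc_FunI: "henc n X \<in> FunI (sqI n)"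
  by (auto simp: henc_def FunI_def)

lemma hdec_add: "hdec n (x + y) = hdec n x + hdec n y"
  by (auto simp: hdec_def fun_eq_iff cpx_eq_iff)
lemma hdec_fsc: "hdec n (fsc c x) = fsc (ofR c) (hdec n x)"
  by (auto simp: hdec_def fun_eq_iff cpx_eq_iff)
lemma henc_add: "henc n (X + Y) = henc n X + henc n Y"
  by (auto simp: henc_def fun_eq_iff)
lemma henc_fsc: "henc n (fsc (ofR c) X) = fsc c (henc n X)"
  by (auto simp: henc_def fun_eq_iff)
lemma henc_zero: "henc n 0 = 0"
  by (auto simp: henc_def fun_eq_iff)

lemma EV_cpx_odd:
  assumes odd: "odd n"
  shows "EV TYPE('a::real_closed_field cpx) n"
  unfolding EV_def
proof (intro allI impI)
  fix A :: "'a cpx mat" assume A: "A \<in> carrier_mat n n"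
  define a where "a = ofmat n A"
  define c1 :: "'a cpx" where "c1 = ofR (1/2)"
  define c2 :: "'a cpx" where "c2 = - ii * ofR (1/2)"
  define P1 where "P1 X = fsc c1 (mm n a X + mm n X (adj a))" for X
  define P2 where "P2 X = fsc c2 (mm n a X - mm n X (adj a))" for X
  define L1 where "L1 x = henc n (P1 (hdec n x))" for x
  define L2 where "L2 x = henc n (P2 (hdec n x))" for x
  have sa: "supp n a" unfolding a_def by (rule supp_ofmat)
  have saa: "supp n (adj a)" using sa by (auto simp: supp_def)
  have cc1: "cnj c1 = c1" by (simp add: c1_def)
  have cc2: "cnj c2 = - c2" by (simp add: c2_def)
  have hP1: "herm n (P1 X)" if "herm n X" for X
  proof -
    have s: "supp n X" "adj X = X" using that by (auto simp: herm_def)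
    have "supp n (P1 X)" unfolding P1_def
      by (intro supp_fsc supp_add supp_mm) (use s sa saa in auto)
    moreover have "adj (P1 X) = P1 X"
      unfolding P1_def adj_fsc adj_add adj_mm s(2) adj_adj cc1 by (simp add: add.commute)
    ultimately show ?thesis by (simp add: herm_def)
  qed
  have hP2: "herm n (P2 X)" if "herm n X" for X
  proof -
    have s: "supp n X" "adj X = X" using that by (auto simp: herm_def)
    have "supp n (P2 X)" unfolding P2_def
      by (intro supp_fsc supp_diff supp_mm) (use s sa saa in auto)
    moreover have "adj (P2 X) = P2 X"
    proof -
      have "adj (P2 X) = fsc (- c2) (mm n X (adj a) - mm n a X)"
        unfolding P2_def adj_fsc adj_diff adj_mm s(2) adj_adj cc2 by simp
      also have "\<dots> = P2 X" unfolding P2_def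
        by (simp add: fun_eq_iff fsc_def algebra_simps)
      finally show ?thesis .
    qed
    ultimately show ?thesis by (simp add: herm_def)
  qed
  have comm: "P1 (P2 X) = P2 (P1 X)" for X
    unfolding P1_def P2_def by (simp add: mm_simps fv.scale_scale mult.commute algebra_simps)
  have linP1: "P1 (X + Y) = P1 X + P1 Y" "P1 (fsc c X) = fsc c (P1 X)" for X Y c
    unfolding P1_def by (simp_all add: mm_simps fv.scale_scale mult.commute algebra_simps)
  have linP2: "P2 (X + Y) = P2 X + P2 Y" "P2 (fsc c X) = fsc c (P2 X)" for X Y c
    unfolding P2_def by (simp_all add: mm_simps fv.scale_scale mult.commute algebra_simps)
  have linL1: "Vector_Spaces.linear fsc fsc L1"
    unfolding Vector_Spaces.linear_iff
    by (auto simp: fv.vector_space_axioms L1_def hdec_add hdec_fsc linP1 henc_add henc_fsc)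
  have linL2: "Vector_Spaces.linear fsc fsc L2"
    unfolding Vector_Spaces.linear_iff
    by (auto simp: fv.vector_space_axioms L2_def hdec_add hdec_fsc linP2 henc_add henc_fsc)
  define I where "I = sqI n"
  have finI: "finite I" unfolding I_def by simp
  have dimS: "fv.dim (FunI I :: (nat \<times> nat \<Rightarrow> 'a) set) = n * n"
    using dim_FunI[OF finI] unfolding I_def by (simp add: card_cartesian_product)
  have "\<exists>v\<in>FunI I. v \<noteq> 0 \<and> (\<exists>al. L1 v = fsc al v) \<and> (\<exists>be. L2 v = fsc be v)"
  proof (rule fv.common_eigen[of "delta ` I" 2 "FunI I" L1 L2])
    show "finite (delta ` I)" using finI by simp
    fix T :: "(nat \<times> nat \<Rightarrow> 'a) set" and h
    assume T: "fv.subspace T" "T \<subseteq> fv.span (delta ` I)" "\<not> 2 dvd fv.dim T"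
      "Vector_Spaces.linear fsc fsc h" "h ` T \<subseteq> T"
    show "\<exists>v\<in>T. v \<noteq> 0 \<and> (\<exists>l. h v = fsc l v)"
      by (rule fv.eigen_from_mat[OF T(1) _ T(2) T(4,5)])
        (use finI EV_real_odd[of "fv.dim T"] T(3) in \<open>auto simp: EV_def\<close>)
  next
    show "fv.subspace (FunI I)" by (rule subspace_FunI)
    show "FunI I \<subseteq> fv.span (delta ` I)" by (rule FunI_span[OF finI])
    show "\<not> 2 dvd fv.dim (FunI I :: (nat \<times> nat \<Rightarrow> 'a) set)" using dimS odd by simp
    show "Vector_Spaces.linear fsc fsc L1" by (fact linL1)
    show "Vector_Spaces.linear fsc fsc L2" by (fact linL2)
    show "L1 ` FunI I \<subseteq> FunI I" using henc_FunI by (auto simp: L1_def I_def)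
    show "L2 ` FunI I \<subseteq> FunI I" using henc_FunI by (auto simp: L2_def I_def)
    show "\<forall>x\<in>FunI I. L1 (L2 x) = L2 (L1 x)"
      unfolding L1_def L2_def
      using hdec_henc[OF hP1[OF hdec_herm]] hdec_henc[OF hP2[OF hdec_herm]] comm by simp
  qed
  then obtain x al be where x: "x \<in> FunI I" "x \<noteq> 0" "L1 x = fsc al x" "L2 x = fsc be x"
    by blast
  define X where "X = hdec n x"
  have hX: "herm n X" unfolding X_def by (rule hdec_herm)
  have P1X: "P1 X = fsc (ofR al) X"
  proof -
    have "P1 X = hdec n (L1 x)" unfolding L1_def X_def using hdec_henc[OF hP1[OF hdec_herm]] by simp
    then show ?thesis using x(3) by (simp add: hdec_fsc X_def)
  qed
  have P2X: "P2 X = fsc (ofR be) X"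
  proof -
    have "P2 X = hdec n (L2 x)" unfolding L2_def X_def using hdec_henc[OF hP2[OF hdec_herm]] by simp
    then show ?thesis using x(4) by (simp add: hdec_fsc X_def)
  qed
  have "mm n a X = P1 X + fsc ii (P2 X)"
  proof -
    have e: "c1 + ii * c2 = 1" "c1 - ii * c2 = 0"
      by (simp_all add: c1_def c2_def cpx_eq_iff)
    have "P1 X + fsc ii (P2 X) = fsc (c1 + ii * c2) (mm n a X) + fsc (c1 - ii * c2) (mm n X (adj a))"
      unfolding P1_def P2_def by (simp add: fun_eq_iff fsc_def algebra_simps)
    then show ?thesis using e by (simp add: fun_eq_iff fsc_def)
  qed
  also have "\<dots> = fsc (ofR al + ii * ofR be) X" unfolding P1X P2X
    by (simp add: fun_eq_iff fsc_def algebra_simps)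
  finally have eq: "mm n (ofmat n A) X = fsc (ofR al + ii * ofR be) X" unfolding a_def .
  have "X \<noteq> 0"
  proof
    assume "X = 0"
    then have "henc n X = 0" by (simp add: henc_zero)
    then show False using henc_hdec[of x n] x(1,2) unfolding X_def I_def by simp
  qed
  then show "\<exists>l. eigenvalue A l" using eigen_from_fun[OF A _ _ eq] hX by (auto simp: herm_def)
qed


section \<open>Square roots\<close>

lemma real_sqrt_ex:
  fixes x :: "'a::real_closed_field"
  assumes "0 \<le> x" shows "\<exists>y\<ge>0. y * y = x"
proof -
  obtain y where "y * y = x" using nonneg_is_square[OF assms] by blast
  then show ?thesis by (intro exI[of _ "\<bar>y\<bar>"]) (auto simp: abs_mult_self_eq)
qed

lemma nonneg_sq_eq:
  fixes x y :: "'a::linordered_idom"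
  assumes "0 \<le> x" "0 \<le> y" "x * x = y * y" shows "x = y"
  using assms square_eq_iff[of x y] by auto

lemma cpx_sqrt_ex:
  fixes w :: "'a::real_closed_field cpx"
  shows "\<exists>z. z * z = w"
proof -
  define a where "a = cre w"
  define b where "b = cim w"
  obtain r where r: "r \<ge> 0" "r * r = a * a + b * b"
    using real_sqrt_ex[of "a * a + b * b"] by auto
  have ra: "\<bar>a\<bar> \<le> r"
  proof (rule ccontr)
    assume "\<not> \<bar>a\<bar> \<le> r"
    then have lt: "r < \<bar>a\<bar>" by simp
    have "r * r < \<bar>a\<bar> * \<bar>a\<bar>" using mult_strict_mono[OF lt lt] r(1) lt by simp
    then have "r * r < a * a" by (simp add: abs_mult_self_eq)
    moreover have "0 \<le> b * b" by simp
    ultimately show False using r(2) by simp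
  qed
  have h1: "0 \<le> (r + a) / 2" and h2: "0 \<le> (r - a) / 2" using ra by auto
  obtain u where u: "u \<ge> 0" "u * u = (r + a) / 2" using real_sqrt_ex[OF h1] by auto
  obtain v0 where v0: "v0 \<ge> 0" "v0 * v0 = (r - a) / 2" using real_sqrt_ex[OF h2] by auto
  define v where "v = (if b \<ge> 0 then v0 else - v0)"
  have uv: "u * u - v * v = a" using u v0 by (simp add: v_def field_simps)
  have sq: "(2 * u * v0) * (2 * u * v0) = \<bar>b\<bar> * \<bar>b\<bar>"
  proof -
    have "(2 * u * v0) * (2 * u * v0) = 4 * (u * u) * (v0 * v0)" by (simp add: algebra_simps)
    also have "\<dots> = (2 * (u * u)) * (2 * (v0 * v0))" by (simp add: algebra_simps)
    also have "\<dots> = (r + a) * (r - a)"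
    proof -
      have e1: "2 * (u * u) = r + a" using u(2) by simp
      have e2: "2 * (v0 * v0) = r - a" using v0(2) by simp
      show ?thesis by (simp only: e1 e2)
    qed
    also have "\<dots> = b * b" using r(2) by (simp add: algebra_simps)
    finally show ?thesis by (simp add: abs_mult_self_eq)
  qed
  have "2 * u * v0 = \<bar>b\<bar>" using nonneg_sq_eq[OF _ _ sq] u(1) v0(1) by simp
  then have uv2: "u * v + v * u = b" by (auto simp: v_def algebra_simps)
  show ?thesis
    by (intro exI[of _ "Cpx u v"]) (simp add: cpx_eq_iff uv uv2 a_def b_def)
qed

lemma cpx_quadratic:
  fixes al be :: "'a::real_closed_field cpx"
  shows "\<exists>m1 m2. m1 + m2 = al \<and> m1 * m2 = be"
proof -
  define h :: "'a cpx" where "h = inverse (1 + 1)"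
  have two: "(1 + 1 :: 'a cpx) \<noteq> 0"
  proof
    assume "(1 + 1 :: 'a cpx) = 0"
    then have "cre (1 + 1 :: 'a cpx) = 0" by (simp only: cpx_simps)
    then show False by (simp only: cpx_simps)
  qed
  have hh: "h + h = 1" unfolding h_def using two by (simp add: distrib_left[symmetric] field_simps)
  obtain s where s: "s * s = al * al - 4 * be" using cpx_sqrt_ex by blast
  have four: "(4 :: 'a cpx) = (1 + 1) * (1 + 1)" by simp
  show ?thesis
  proof (intro exI conjI)
    have "h * (al + s) + h * (al - s) = (h + h) * al" by (simp add: algebra_simps)
    then show "h * (al + s) + h * (al - s) = al" using hh by simp
    have "h * (al + s) * (h * (al - s)) = h * h * (al * al - s * s)" by (simp add: algebra_simps)
    also have "\<dots> = h * h * (4 * be)" using s by simp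
    also have "\<dots> = ((1 + 1) * h) * ((1 + 1) * h) * be" unfolding four by (simp add: algebra_simps)
    also have "(1 + 1) * h = 1" unfolding h_def using two by simp
    finally show "h * (al + s) * (h * (al - s)) = be" by simp
  qed
qed

section \<open>Symmetric matrices and the induction\<close>

definition symI :: "nat \<Rightarrow> (nat \<times> nat) set" where
  "symI n = {(i,j). i \<le> j \<and> j < n}"

lemma finite_symI: "finite (symI n)"
  by (rule finite_subset[of _ "{..<n} \<times> {..<n}"]) (auto simp: symI_def)

lemma card_symI: "2 * card (symI n) = n * (n + 1)"
proof (induct n)
  case 0
  then show ?case by (simp add: symI_def)
next
  case (Suc n)
  have eq: "symI (Suc n) = symI n \<union> (\<lambda>i. (i, n)) ` {..n}"
    by (auto simp: symI_def)
  have dis: "symI n \<inter> (\<lambda>i. (i, n)) ` {..n} = {}" by (auto simp: symI_def)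
  have "card (symI (Suc n)) = card (symI n) + card ((\<lambda>i. (i, n)) ` {..n})"
    unfolding eq using dis finite_symI by (intro card_Un_disjoint) auto
  also have "card ((\<lambda>i. (i, n)) ` {..n}) = Suc n"
    by (subst card_image) (auto simp: inj_on_def)
  finally show ?case using Suc by simp
qed

definition sdec :: "nat \<Rightarrow> (nat \<times> nat \<Rightarrow> 'k::zero) \<Rightarrow> (nat \<times> nat \<Rightarrow> 'k)" where
  "sdec n x = (\<lambda>(i,j). if i < n \<and> j < n then x (min i j, max i j) else 0)"

definition senc :: "nat \<Rightarrow> (nat \<times> nat \<Rightarrow> 'k::zero) \<Rightarrow> (nat \<times> nat \<Rightarrow> 'k)" where
  "senc n X = (\<lambda>(i,j). if i \<le> j \<and> j < n then X (i,j) else 0)"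

definition symm :: "nat \<Rightarrow> (nat \<times> nat \<Rightarrow> 'k::zero) \<Rightarrow> bool" where
  "symm n X \<longleftrightarrow> supp n X \<and> trn X = X"

lemma sdec_symm: "symm n (sdec n x)"
  by (auto simp: symm_def supp_def sdec_def fun_eq_iff min_def max_def)

lemma sdec_senc: assumes "symm n X" shows "sdec n (senc n X) = X"
proof
  fix p :: "nat \<times> nat"
  obtain i j where p: "p = (i,j)" by (cases p)
  have s: "supp n X" and t: "X (j,i) = X (i,j)" using assms
    by (auto simp: symm_def fun_eq_iff trn_def)
  show "sdec n (senc n X) p = X p"
    using s t unfolding p by (auto simp: sdec_def senc_def supp_def min_def max_def)
qed

lemma senc_sdec: assumes "x \<in> FunI (symI n)" shows "senc n (sdec n x) = x"
proof
  fix p :: "nat \<times> nat"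
  obtain i j where p: "p = (i,j)" by (cases p)
  show "senc n (sdec n x) p = x p"
    using assms unfolding p by (auto simp: sdec_def senc_def FunI_def symI_def min_def max_def)
qed

lemma senc_FunI: "senc n X \<in> FunI (symI n)"
  by (auto simp: senc_def FunI_def symI_def)

lemma sdec_add: "sdec n (x + y) = sdec n x + sdec n (y :: nat \<times> nat \<Rightarrow> 'k::field)"
  by (auto simp: sdec_def fun_eq_iff)
lemma sdec_fsc: "sdec n (fsc c x) = fsc c (sdec n x)"
  by (auto simp: sdec_def fun_eq_iff)
lemma senc_add: "senc n (X + Y) = senc n X + senc n (Y :: nat \<times> nat \<Rightarrow> 'k::field)"
  by (auto simp: senc_def fun_eq_iff)
lemma senc_fsc: "senc n (fsc c X) = fsc c (senc n X)"
  by (auto simp: senc_def fun_eq_iff)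
lemma senc_zero: "senc n 0 = (0 :: nat \<times> nat \<Rightarrow> 'k::field)"
  by (auto simp: senc_def fun_eq_iff)

lemma trn_add: "trn (X + Y) = trn X + trn Y" by (auto simp: trn_def fun_eq_iff)
lemma trn_trn [simp]: "trn (trn X) = X" by (auto simp: trn_def fun_eq_iff)
lemma supp_trn: "supp n X \<Longrightarrow> supp n (trn X)" by (auto simp: supp_def)

lemma two_adic_step:
  assumes k: "k \<ge> 1" and d: "2 ^ k dvd n" and nd: "\<not> 2 ^ Suc k dvd n"
  shows "\<not> 2 ^ k dvd card (symI n)"
proof
  assume a: "2 ^ k dvd card (symI n)"
  obtain j where j: "k = Suc j" using k by (cases k) auto
  have "2 dvd (2::nat) ^ k" unfolding j by simp
  then have "2 dvd n" using d by (rule dvd_trans)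
  then have odd1: "odd (n + 1)" by simp
  have "2 ^ Suc k dvd 2 * card (symI n)" using a by simp
  then have "2 ^ Suc k dvd n * (n + 1)" using card_symI by metis
  moreover have "coprime (2 ^ Suc k) (n + 1)" using odd1 by simp
  ultimately have "2 ^ Suc k dvd n" using coprime_dvd_mult_left_iff by blast
  then show False using nd by simp
qed

lemma EV_cpx_2adic:
  "\<forall>n. \<not> 2 ^ k dvd n \<longrightarrow> EV TYPE('a::real_closed_field cpx) n"
proof (induct k)
  case 0
  then show ?case by simp
next
  case (Suc k)
  show ?case
  proof (intro allI impI)
    fix n :: nat assume nd: "\<not> 2 ^ Suc k dvd n"
    show "EV TYPE('a cpx) n"
    proof (cases "2 ^ k dvd n")
      case False
      then show ?thesis using Suc by blast
    next
      case True
      show ?thesis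
      proof (cases "k = 0")
        case True
        then have "odd n" using nd by simp
        then show ?thesis by (rule EV_cpx_odd)
      next
        case False
        then have k1: "k \<ge> 1" by simp
        have ndim: "\<not> 2 ^ k dvd card (symI n)" using two_adic_step[OF k1 True nd] .
        show ?thesis unfolding EV_def
        proof (intro allI impI)
          fix A :: "'a cpx mat" assume A: "A \<in> carrier_mat n n"
          define a where "a = ofmat n A"
          have sa: "supp n a" unfolding a_def by (rule supp_ofmat)
          have sta: "supp n (trn a)" using sa by (rule supp_trn)
          define P1 where "P1 X = mm n a X + mm n X (trn a)" for X
          define P2 where "P2 X = mm n (mm n a X) (trn a)" for X
          define L1 where "L1 x = senc n (P1 (sdec n x))" for x :: "nat \<times> nat \<Rightarrow> 'a cpx"
          define L2 where "L2 x = senc n (P2 (sdec n x))" for x :: "nat \<times> nat \<Rightarrow> 'a cpx"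
          have sP1: "symm n (P1 X)" if "symm n X" for X
          proof -
            have s: "supp n X" "trn X = X" using that by (auto simp: symm_def)
            have "supp n (P1 X)" unfolding P1_def by (intro supp_add supp_mm) (use s sa sta in auto)
            moreover have "trn (P1 X) = P1 X"
              unfolding P1_def trn_add trn_mm s(2) trn_trn by (simp add: add.commute)
            ultimately show ?thesis by (simp add: symm_def)
          qed
          have sP2: "symm n (P2 X)" if "symm n X" for X
          proof -
            have s: "supp n X" "trn X = X" using that by (auto simp: symm_def)
            have "supp n (P2 X)" unfolding P2_def by (intro supp_mm) (use s sa sta in auto)
            moreover have "trn (P2 X) = P2 X"
              unfolding P2_def trn_mm s(2) trn_trn by (simp add: mm_assoc)
            ultimately show ?thesis by (simp add: symm_def)
          qed
          have comm: "P1 (P2 X) = P2 (P1 X)" for X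
            unfolding P1_def P2_def by (simp add: mm_simps algebra_simps)
          have linP1: "P1 (X + Y) = P1 X + P1 Y" "P1 (fsc c X) = fsc c (P1 X)" for X Y c
            unfolding P1_def by (simp_all add: mm_simps algebra_simps)
          have linP2: "P2 (X + Y) = P2 X + P2 Y" "P2 (fsc c X) = fsc c (P2 X)" for X Y c
            unfolding P2_def by (simp_all add: mm_simps algebra_simps)
          have linL1: "Vector_Spaces.linear fsc fsc L1"
            unfolding Vector_Spaces.linear_iff
            by (auto simp: fv.vector_space_axioms L1_def sdec_add sdec_fsc linP1 senc_add senc_fsc)
          have linL2: "Vector_Spaces.linear fsc fsc L2"
            unfolding Vector_Spaces.linear_iff
            by (auto simp: fv.vector_space_axioms L2_def sdec_add sdec_fsc linP2 senc_add senc_fsc)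
          define I where "I = symI n"
          have finI: "finite I" unfolding I_def by (rule finite_symI)
          have dimS: "fv.dim (FunI I :: (nat \<times> nat \<Rightarrow> 'a cpx) set) = card (symI n)"
            using dim_FunI[OF finI] unfolding I_def by simp
          have "\<exists>v\<in>FunI I. v \<noteq> 0 \<and> (\<exists>al. L1 v = fsc al v) \<and> (\<exists>be. L2 v = fsc be v)"
          proof (rule fv.common_eigen[of "delta ` I" "2 ^ k" "FunI I" L1 L2])
            show "finite (delta ` I)" using finI by simp
            fix T :: "(nat \<times> nat \<Rightarrow> 'a cpx) set" and h
            assume T: "fv.subspace T" "T \<subseteq> fv.span (delta ` I)" "\<not> 2 ^ k dvd fv.dim T"
              "Vector_Spaces.linear fsc fsc h" "h ` T \<subseteq> T"
            show "\<exists>v\<in>T. v \<noteq> 0 \<and> (\<exists>l. h v = fsc l v)"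
              by (rule fv.eigen_from_mat[OF T(1) _ T(2) T(4,5)])
                (use finI Suc[rule_format, of "fv.dim T"] T(3) in \<open>auto simp: EV_def\<close>)
          next
            show "fv.subspace (FunI I)" by (rule subspace_FunI)
            show "FunI I \<subseteq> fv.span (delta ` I)" by (rule FunI_span[OF finI])
            show "\<not> 2 ^ k dvd fv.dim (FunI I :: (nat \<times> nat \<Rightarrow> 'a cpx) set)" using dimS ndim by simp
            show "Vector_Spaces.linear fsc fsc L1" by (fact linL1)
            show "Vector_Spaces.linear fsc fsc L2" by (fact linL2)
            show "L1 ` FunI I \<subseteq> FunI I" using senc_FunI by (auto simp: L1_def I_def)
            show "L2 ` FunI I \<subseteq> FunI I" using senc_FunI by (auto simp: L2_def I_def)
            show "\<forall>x\<in>FunI I. L1 (L2 x) = L2 (L1 x)"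
              unfolding L1_def L2_def
              using sdec_senc[OF sP1[OF sdec_symm]] sdec_senc[OF sP2[OF sdec_symm]] comm by simp
          qed
          then obtain x al be where x: "x \<in> FunI I" "x \<noteq> 0" "L1 x = fsc al x" "L2 x = fsc be x"
            by blast
          define X where "X = sdec n x"
          have sX: "symm n X" unfolding X_def by (rule sdec_symm)
          have P1X: "P1 X = fsc al X"
          proof -
            have "P1 X = sdec n (L1 x)" unfolding L1_def X_def using sdec_senc[OF sP1[OF sdec_symm]] by simp
            then show ?thesis using x(3) by (simp add: sdec_fsc X_def)
          qed
          have P2X: "P2 X = fsc be X"
          proof -
            have "P2 X = sdec n (L2 x)" unfolding L2_def X_def using sdec_senc[OF sP2[OF sdec_symm]] by simp
            then show ?thesis using x(4) by (simp add: sdec_fsc X_def)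
          qed
          have X0: "X \<noteq> 0"
          proof
            assume "X = 0"
            then have "senc n X = 0" by (simp add: senc_zero)
            then show False using senc_sdec[of x n] x(1,2) unfolding X_def I_def by simp
          qed
          have suppX: "supp n X" using sX by (simp add: symm_def)
          obtain m1 m2 where m: "m1 + m2 = al" "m1 * m2 = be" using cpx_quadratic by blast
          define Y where "Y = mm n a X"
          define Z where "Z = mm n X (trn a)"
          have YZ: "Y + Z = fsc al X" using P1X unfolding P1_def Y_def Z_def .
          have aZ: "mm n a Z = fsc be X" using P2X unfolding P2_def Z_def Y_def by (simp add: mm_assoc)
          define C where "C = Y - fsc m2 X"
          have aY: "mm n a Y = fsc al Y - fsc be X"
          proof -
            have "Y = fsc al X - Z" using YZ by (simp add: algebra_simps)
            then have "mm n a Y = fsc al (mm n a X) - mm n a Z" by (simp add: mm_simps)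
            then show ?thesis using aZ Y_def by simp
          qed
          have aC: "mm n a C = fsc m1 C"
          proof -
            have "mm n a C = fsc al Y - fsc be X - fsc m2 Y" unfolding C_def
              by (simp add: mm_simps aY Y_def[symmetric])
            also have "\<dots> = fsc m1 C" unfolding C_def m(1)[symmetric] m(2)[symmetric]
              by (simp add: fun_eq_iff fsc_def algebra_simps)
            finally show ?thesis .
          qed
          show "\<exists>l. eigenvalue A l"
          proof (cases "C = 0")
            case True
            then have "mm n (ofmat n A) X = fsc m2 X" unfolding C_def Y_def a_def by simp
            then show ?thesis using eigen_from_fun[OF A suppX X0] by blast
          next
            case False
            have "supp n C" unfolding C_def Y_def by (intro supp_diff supp_mm supp_fsc sa suppX)
            then show ?thesis using eigen_from_fun[OF A _ False] aC unfolding a_def by blast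
          qed
        qed
      qed
    qed
  qed
qed

lemma EV_cpx:
  assumes "n > 0" shows "EV TYPE('a::real_closed_field cpx) n"
proof -
  have "n < 2 ^ n" by (rule less_exp)
  then have "\<not> 2 ^ n dvd n" using assms dvd_imp_le[of "2 ^ n" n] by linarith
  then show ?thesis using EV_cpx_2adic by blast
qed


section \<open>Fundamental theorem of algebra for the complexification\<close>

interpretation pv: vector_space "Polynomial.smult :: 'k::field \<Rightarrow> 'k poly \<Rightarrow> 'k poly"
  by unfold_locales (auto simp: smult_add_right smult_add_left)

lemma cpx_poly_root:
  fixes p :: "'a::real_closed_field cpx poly"
  assumes deg: "degree p > 0"
  shows "\<exists>z. poly p z = 0"
proof -
  define n where "n = degree p"
  have p0: "p \<noteq> 0" using deg by auto
  define S where "S = {q :: 'a cpx poly. degree q < n}"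
  define B0 where "B0 = (\<lambda>i. monom (1 :: 'a cpx) i) ` {..<n}"
  have n0: "n > 0" using deg n_def by simp
  have subS: "pv.subspace S"
    unfolding pv.subspace_def S_def using n0
    by (auto intro: le_less_trans[OF degree_add_le_max] le_less_trans[OF degree_smult_le])
  have SB0: "S \<subseteq> pv.span B0"
  proof
    fix q assume q: "q \<in> S"
    have "q = (\<Sum>i\<le>degree q. monom (coeff q i) i)" by (simp add: poly_as_sum_of_monoms)
    also have "\<dots> = (\<Sum>i\<le>degree q. Polynomial.smult (coeff q i) (monom 1 i))" by (simp add: smult_monom)
    also have "\<dots> \<in> pv.span B0"
    proof (rule pv.span_sum)
      fix i assume "i \<in> {..degree q}"
      then have "i < n" using q by (auto simp: S_def)
      then show "Polynomial.smult (coeff q i) (monom 1 i) \<in> pv.span B0"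
        by (intro pv.span_scale pv.span_base) (auto simp: B0_def)
    qed
    finally show "q \<in> pv.span B0" .
  qed
  have finB0: "finite B0" unfolding B0_def by simp
  define h where "h q = (pCons 0 q) mod p" for q
  have linh: "Vector_Spaces.linear Polynomial.smult Polynomial.smult h"
  proof -
    have "pCons 0 (x + y) mod p = pCons 0 x mod p + pCons 0 y mod p" for x y
    proof -
      show ?thesis using poly_mod_add_left[of "pCons 0 x" "pCons 0 y" p] by simp
    qed
    moreover have "pCons 0 (Polynomial.smult c x) mod p = Polynomial.smult c (pCons 0 x mod p)" for c x
    proof -
      show ?thesis using mod_smult_left[of c "pCons 0 x" p] by simp
    qed
    ultimately show ?thesis unfolding Vector_Spaces.linear_iff by (auto simp: pv.vector_space_axioms h_def)
  qed
  have hS: "h ` S \<subseteq> S"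
  proof
    fix y assume "y \<in> h ` S"
    then obtain q where y: "y = pCons 0 q mod p" by (auto simp: h_def)
    show "y \<in> S"
    proof (cases "y = 0")
      case True then show ?thesis using n0 by (simp add: S_def)
    next
      case False then show ?thesis using degree_mod_less[OF p0, of "pCons 0 q"] y by (auto simp: S_def n_def)
    qed
  qed
  have "1 \<in> S" using n0 by (simp add: S_def)
  then have dpos: "pv.dim S \<ge> 1" using pv.dim_pos[OF finB0 SB0, of 1] by simp
  have mat: "\<exists>l. eigenvalue A l" if "A \<in> carrier_mat (pv.dim S) (pv.dim S)" for A :: "'a cpx mat"
    using EV_cpx[of "pv.dim S"] dpos that by (auto simp: EV_def)
  obtain q l where q: "q \<in> S" "q \<noteq> 0" "h q = Polynomial.smult l q"
    using pv.eigen_from_mat[OF subS finB0 SB0 linh hS mat] by blast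
  define r where "r = pCons 0 q div p"
  have "pCons 0 q = r * p + Polynomial.smult l q" using q(3) div_mult_mod_eq[of "pCons 0 q" p]
    unfolding h_def r_def by simp
  then have eq: "[:- l, 1:] * q = r * p"
    by (simp add: algebra_simps)
  show ?thesis
  proof (rule ccontr)
    assume nr: "\<nexists>z. poly p z = 0"
    have "poly r l * poly p l = 0" using arg_cong[OF eq, of "\<lambda>x. poly x l"] by simp
    then have "poly r l = 0" using nr by auto
    then obtain r' where r': "r = [:- l, 1:] * r'" using poly_eq_0_iff_dvd by (metis dvdE)
    have "[:- l, 1:] * q = [:- l, 1:] * (r' * p)" by (simp only: eq r' mult.assoc)
    then have "q = r' * p" by (metis mult_left_cancel pCons_eq_0_iff one_neq_zero)
    then have "r' \<noteq> 0" "degree q = degree r' + degree p" using q(2) p0 by (auto simp: degree_mult_eq)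
    then show False using q(1) by (simp add: S_def n_def)
  qed
qed

section \<open>Intermediate value theorem for polynomials\<close>

interpretation ofRh: comm_ring_hom "ofR :: 'a::comm_ring_1 \<Rightarrow> 'a cpx"
  by unfold_locales simp_all

interpretation ofRp: map_poly_comm_ring_hom "ofR :: 'a::comm_ring_1 \<Rightarrow> 'a cpx" ..

lemma real_poly_factor:
  fixes p :: "'a::real_closed_field poly"
  assumes "degree p > 0"
  shows "(\<exists>r q. p = [:- r, 1:] * q) \<or> (\<exists>u v q. v \<noteq> 0 \<and> p = [:u * u + v * v, - 2 * u, 1:] * q)"
proof -
  have "degree (map_poly ofR p) > 0" using assms by (simp add: degree_map_poly)
  then obtain z where z: "poly (map_poly ofR p) z = 0" using cpx_poly_root by blast
  show ?thesis
  proof (cases "cim z = 0")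
    case True
    then have "z = ofR (cre z)" by (simp add: cpx_eq_iff)
    then have "poly p (cre z) = 0" using z ofRh.poly_map_poly[of p "cre z"] by simp
    then show ?thesis using poly_eq_0_iff_dvd by (metis dvdE)
  next
    case False
    define u where "u = cre z"
    define v where "v = cim z"
    define D :: "'a poly" where "D = [:u * u + v * v, - 2 * u, 1:]"
    have D0: "D \<noteq> 0" and dD: "degree D = 2" by (simp_all add: D_def)
    define m where "m = p mod D"
    have dm: "degree m \<le> 1"
    proof (cases "m = 0")
      case False
      then show ?thesis using degree_mod_less[OF D0, of p] dD by (simp add: m_def)
    qed simp
    have mform: "m = [:coeff m 0, coeff m 1:]"
    proof (rule poly_eqI)
      fix i show "coeff m i = coeff [:coeff m 0, coeff m 1:] i"
        using dm by (cases i; cases "i - 1") (auto simp: coeff_eq_0)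
    qed
    have pD: "poly (map_poly ofR D) z = 0"
      by (simp add: D_def cpx_eq_iff u_def v_def algebra_simps)
    have "map_poly ofR p = map_poly ofR (p div D) * map_poly ofR D + map_poly ofR m"
      using div_mult_mod_eq[of p D] unfolding m_def by (metis ofRp.hom_add ofRp.hom_mult)
    then have "poly (map_poly ofR m) z = 0" using z pD by simp
    then have "poly (map_poly ofR [:coeff m 0, coeff m 1:]) z = 0" using mform by simp
    then have c: "coeff m 0 + coeff m 1 * u = 0" "coeff m 1 * v = 0"
      by (simp_all add: cpx_eq_iff u_def v_def ofRh.map_poly_pCons_hom algebra_simps)
    then have "coeff m 1 = 0" using False v_def by simp
    then have "coeff m 0 = 0" using c by simp
    then have "m = 0" using mform \<open>coeff m 1 = 0\<close> by simp
    then have "p = p div D * D" using div_mult_mod_eq[of p D] m_def by simp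
    then show ?thesis using False unfolding D_def v_def by (metis mult.commute)
  qed
qed

lemma pos_mult_neg_aux: "0 < (c::'a::linordered_idom) \<Longrightarrow> c * d < 0 \<Longrightarrow> d < 0"
  by (auto simp: mult_less_0_iff)

lemma poly_ivt:
  fixes p :: "'a::real_closed_field poly"
  assumes "x < y" "poly p x * poly p y < 0"
  shows "\<exists>r. x < r \<and> r < y \<and> poly p r = 0"
  using assms(2)
proof (induction "degree p" arbitrary: p rule: less_induct)
  case less
  have "degree p > 0"
  proof (rule ccontr)
    assume "\<not> degree p > 0"
    then obtain c where "p = [:c:]" by (metis degree_eq_zeroE neq0_conv)
    then show False using less.prems by simp
  qed
  then have p0: "p \<noteq> 0" by auto
  from real_poly_factor[OF \<open>degree p > 0\<close>] show ?case
  proof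
    assume "\<exists>r q. p = [:- r, 1:] * q"
    then obtain r q where pq: "p = [:- r, 1:] * q" by blast
    show ?thesis
    proof (cases "x < r \<and> r < y")
      case True
      then show ?thesis using pq by auto
    next
      case False
      have q0: "q \<noteq> 0" using pq p0 by auto
      have "degree p = degree q + 1" unfolding pq by (subst degree_mult_eq) (use q0 in auto)
      then have dq: "degree q < degree p" by simp
      have pos: "(x - r) * (y - r) > 0"
      proof -
        have "x \<noteq> r" "y \<noteq> r" using less.prems pq by auto
        then show ?thesis using False assms(1) by (auto intro: mult_pos_pos mult_neg_neg)
      qed
      have pt: "poly p t = (t - r) * poly q t" for t unfolding pq by (simp add: algebra_simps)
      have "poly p x * poly p y = ((x - r) * (y - r)) * (poly q x * poly q y)"
        unfolding pt by (simp add: algebra_simps)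
      then have "poly q x * poly q y < 0" using less.prems pos pos_mult_neg_aux by metis
      then obtain t where "x < t" "t < y" "poly q t = 0" using less.hyps[OF dq] by blast
      then show ?thesis using pq by auto
    qed
  next
    assume "\<exists>u v q. v \<noteq> 0 \<and> p = [:u * u + v * v, - 2 * u, 1:] * q"
    then obtain u v q where v: "v \<noteq> 0" and pq: "p = [:u * u + v * v, - 2 * u, 1:] * q" by blast
    define D :: "'a poly" where "D = [:u * u + v * v, - 2 * u, 1:]"
    have Dpos: "poly D t > 0" for t
    proof -
      have "poly D t = (t - u) * (t - u) + v * v" by (simp add: D_def algebra_simps)
      moreover have "v * v > 0" using v by (cases "v > 0") (auto intro: mult_pos_pos mult_neg_neg)
      moreover have "(t - u) * (t - u) \<ge> 0" by simp
      ultimately show ?thesis using add_nonneg_pos by metis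
    qed
    have q0: "q \<noteq> 0" using pq p0 by auto
    have "degree p = degree q + 2" unfolding pq by (subst degree_mult_eq) (use q0 in auto)
    then have dq: "degree q < degree p" by simp
    have pt: "poly p t = poly D t * poly q t" for t unfolding pq D_def by (simp add: algebra_simps)
    have "poly p x * poly p y = (poly D x * poly D y) * (poly q x * poly q y)"
      unfolding pt by (simp add: algebra_simps)
    moreover have "poly D x * poly D y > 0" using Dpos by simp
    ultimately have "poly q x * poly q y < 0" using less.prems pos_mult_neg_aux by metis
    then obtain t where "x < t" "t < y" "poly q t = 0" using less.hyps[OF dq] by blast
    then show ?thesis using pq by auto
  qed
qed


section \<open>Orders and cofactors\<close>

lemma order_cofac_char:
  fixes U :: "'a::field poly"
  assumes P: "P = [:-x,1:]^m * U" and U: "poly U x \<noteq> 0"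
  shows "order x P = m" "cofac P x = U" "P \<noteq> 0"
proof -
  have U0: "U \<noteq> 0" using U by auto
  have X0: "[:-x,1:]^m \<noteq> 0" by simp
  show P0: "P \<noteq> 0" using P U0 X0 by simp
  show om: "order x P = m" using P P0 order_mult[of "[:-x,1:]^m" U x] order_power_n_n order_0I[OF U] by simp
  have "cofac P x = P div [:-x,1:]^m" by (simp add: cofac_def om)
  then show "cofac P x = U" using P X0 by simp
qed

lemma cofac_decomp:
  fixes P :: "'a::field poly"
  assumes "P \<noteq> 0"
  shows "P = [:-x,1:]^order x P * cofac P x" "poly (cofac P x) x \<noteq> 0"
proof -
  obtain q where q: "P = [:- x, 1:] ^ order x P * q" "\<not> [:- x, 1:] dvd q"
    using order_decomp[OF assms] by blast
  have "poly q x \<noteq> 0" using q(2) by (simp add: poly_eq_0_iff_dvd)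
  then have "cofac P x = q" using order_cofac_char(2)[OF q(1)] by simp
  then show "P = [:-x,1:]^order x P * cofac P x" "poly (cofac P x) x \<noteq> 0"
    using q \<open>poly q x \<noteq> 0\<close> by auto
qed

lemma order_ge_factor:
  fixes W :: "'a::field poly"
  assumes "P = [:-x,1:]^m * W" "W \<noteq> 0"
  shows "order x P \<ge> m"
proof -
  have "P \<noteq> 0" using assms by simp
  then have "order x P = m + order x W"
    using assms order_mult[of "[:-x,1:]^m" W x] order_power_n_n by simp
  then show ?thesis by simp
qed

lemma Ind_pt_nonzero:
  assumes "Ind_pt P Q x \<noteq> 0"
  shows "P \<noteq> 0" "Q \<noteq> 0" "order x P < order x Q"
  using assms by (auto simp: Ind_pt_def Ind_plus_def Ind_minus_def split: if_splits)

lemma Ind_pt_root: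
  assumes "Ind_pt P Q x \<noteq> 0" shows "poly Q x = 0"
  using Ind_pt_nonzero[OF assms] order_root[of Q x] by auto

lemma finite_Ind_pt: "finite {x. Ind_pt P Q x \<noteq> 0}"
proof (cases "Q = 0")
  case True
  then have "{x. Ind_pt P Q x \<noteq> 0} = {}" using Ind_pt_nonzero(2) by blast
  then show ?thesis by simp
next
  case False
  have "{x. Ind_pt P Q x \<noteq> 0} \<subseteq> {x. poly Q x = 0}" using Ind_pt_root by auto
  then show ?thesis using poly_roots_finite[OF False] finite_subset by blast
qed

lemma Ind_lt_split:
  assumes "a < c" "c < b"
  shows "Ind_lt P Q a b = Ind_lt P Q a c + Ind_lt P Q c b"
proof -
  let ?Z = "{x. Ind_pt P Q x \<noteq> 0}"
  have fin: "finite ?Z" by (rule finite_Ind_pt)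
  let ?S = "\<lambda>u v. {x. u < x \<and> x < v \<and> Ind_pt P Q x \<noteq> 0}"
  have fS: "finite (?S u v)" for u v by (rule finite_subset[OF _ fin]) auto
  have eq: "?S a b = ?S a c \<union> (?S c b \<union> {x. x = c \<and> Ind_pt P Q x \<noteq> 0})"
    using assms by auto
  have d1: "?S a c \<inter> (?S c b \<union> {x. x = c \<and> Ind_pt P Q x \<noteq> 0}) = {}" by auto
  have d2: "?S c b \<inter> {x. x = c \<and> Ind_pt P Q x \<noteq> 0} = {}" by auto
  have fc: "finite {x. x = c \<and> Ind_pt P Q x \<noteq> 0}" by simp
  have c: "(\<Sum>x\<in>{x. x = c \<and> Ind_pt P Q x \<noteq> 0}. Ind_pt P Q x) = Ind_pt P Q c"
  proof -
    have "{x. x = c \<and> Ind_pt P Q x \<noteq> 0} = (if Ind_pt P Q c \<noteq> 0 then {c} else {})" by auto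
    then show ?thesis by simp
  qed
  have "(\<Sum>x\<in>?S a b. Ind_pt P Q x) = (\<Sum>x\<in>?S a c. Ind_pt P Q x) + (\<Sum>x\<in>?S c b. Ind_pt P Q x) + Ind_pt P Q c"
    unfolding eq using fS d1 d2 fc c by (simp add: sum.union_disjoint)
  then show ?thesis unfolding Ind_lt_def Ind_pt_def by simp
qed

section \<open>Invariance under shears and scalings\<close>

lemma shear_data:
  fixes P Q :: "'a::field poly"
  assumes P0: "P \<noteq> 0" and Q0: "Q \<noteq> 0" and lt: "order x P < order x Q"
  shows "P + Polynomial.smult r Q \<noteq> 0 \<and> order x (P + Polynomial.smult r Q) = order x P \<and>
         poly (cofac (P + Polynomial.smult r Q) x) x = poly (cofac P x) x"
proof -
  let ?X = "[:-x,1:]"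
  define d where "d = order x Q - order x P"
  have d: "d > 0" "order x Q = order x P + d" using lt by (auto simp: d_def)
  have P: "P = ?X^order x P * cofac P x" "poly (cofac P x) x \<noteq> 0" using cofac_decomp[OF P0] by auto
  have Q: "Q = ?X^order x Q * cofac Q x" using cofac_decomp[OF Q0] by auto
  define W where "W = cofac P x + Polynomial.smult r (?X^d * cofac Q x)"
  have "P + Polynomial.smult r Q = ?X^order x P * W"
    unfolding W_def using P(1) Q d(2)
    by (simp add: algebra_simps power_add)
  moreover have "poly W x = poly (cofac P x) x" using d(1) by (simp add: W_def)
  ultimately show ?thesis using order_cofac_char[of "P + Polynomial.smult r Q" x "order x P" W] P(2) by auto
qed

lemma shear_no:
  fixes P Q :: "'a::field poly"
  assumes Q0: "Q \<noteq> 0" and nlt: "\<not> (P \<noteq> 0 \<and> order x P < order x Q)"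
  shows "\<not> (P + Polynomial.smult r Q \<noteq> 0 \<and> order x (P + Polynomial.smult r Q) < order x Q)"
proof
  assume a: "P + Polynomial.smult r Q \<noteq> 0 \<and> order x (P + Polynomial.smult r Q) < order x Q"
  let ?X = "[:-x,1:]"
  have Q: "Q = ?X^order x Q * cofac Q x" using cofac_decomp[OF Q0] by auto
  have "\<exists>W. P = ?X^order x Q * W"
  proof (cases "P = 0")
    case True then show ?thesis by (intro exI[of _ 0]) simp
  next
    case False
    then have ge: "order x P \<ge> order x Q" using nlt by auto
    have "P = ?X^order x P * cofac P x" using cofac_decomp[OF False] by auto
    also have "?X^order x P = ?X^order x Q * ?X^(order x P - order x Q)"
      using ge by (simp flip: power_add)
    finally show ?thesis by (metis mult.assoc)
  qed
  then obtain W where W: "P = ?X^order x Q * W" by blast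
  have "P + Polynomial.smult r Q = ?X^order x Q * (W + Polynomial.smult r (cofac Q x))"
    using W Q by (simp add: algebra_simps)
  then have "order x (P + Polynomial.smult r Q) \<ge> order x Q"
    using a by (intro order_ge_factor) auto
  then show False using a by simp
qed

lemma Ind_plus_shear: "Ind_plus (P + Polynomial.smult r Q) Q x = Ind_plus P Q x"
proof (cases "Q = 0")
  case True then show ?thesis by (simp add: Ind_plus_def)
next
  case Q0: False
  show ?thesis
  proof (cases "P \<noteq> 0 \<and> order x P < order x Q")
    case True
    then show ?thesis using shear_data[of P Q x r] Q0 by (auto simp: Ind_plus_def)
  next
    case False
    then show ?thesis using shear_no[OF Q0 False, of r] by (auto simp: Ind_plus_def)
  qed
qed

lemma Ind_minus_shear: "Ind_minus (P + Polynomial.smult r Q) Q x = Ind_minus P Q x"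
proof (cases "Q = 0")
  case True then show ?thesis by (simp add: Ind_minus_def)
next
  case Q0: False
  show ?thesis
  proof (cases "P \<noteq> 0 \<and> order x P < order x Q")
    case True
    then show ?thesis using shear_data[of P Q x r] Q0 by (auto simp: Ind_minus_def)
  next
    case False
    then show ?thesis using shear_no[OF Q0 False, of r] by (auto simp: Ind_minus_def)
  qed
qed

lemma Ind_pt_shear: "Ind_pt (P + Polynomial.smult r Q) Q x = Ind_pt P Q x"
  by (simp add: Ind_pt_def Ind_plus_shear Ind_minus_shear)

lemma Ind_lt_shear: "Ind_lt (P + Polynomial.smult r Q) Q a b = Ind_lt P Q a b"
  by (simp add: Ind_lt_def Ind_pt_shear Ind_plus_shear Ind_minus_shear)

lemma cofac_smult: "c \<noteq> 0 \<Longrightarrow> cofac (Polynomial.smult c P) x = Polynomial.smult c (cofac P x)"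
  by (simp add: cofac_def order_smult div_smult_left)

lemma Ind_plus_scale:
  assumes "c \<noteq> 0" "k \<noteq> 0"
  shows "Ind_plus (Polynomial.smult c P) (Polynomial.smult k Q) x = sgn (c * k) * Ind_plus P Q x"
  using assms by (auto simp: Ind_plus_def order_smult cofac_smult sgn_mult algebra_simps)

lemma Ind_minus_scale:
  assumes "c \<noteq> 0" "k \<noteq> 0"
  shows "Ind_minus (Polynomial.smult c P) (Polynomial.smult k Q) x = sgn (c * k) * Ind_minus P Q x"
  using assms by (auto simp: Ind_minus_def order_smult cofac_smult sgn_mult algebra_simps)

lemma Ind_pt_scale:
  assumes "c \<noteq> 0" "k \<noteq> 0"
  shows "Ind_pt (Polynomial.smult c P) (Polynomial.smult k Q) x = sgn (c * k) * Ind_pt P Q x"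
  using assms by (simp add: Ind_pt_def Ind_plus_scale Ind_minus_scale algebra_simps)

lemma Ind_lt_scale:
  fixes P Q :: "'a::linordered_field poly"
  assumes "c \<noteq> 0" "k \<noteq> 0"
  shows "Ind_lt (Polynomial.smult c P) (Polynomial.smult k Q) a b = sgn (c * k) * Ind_lt P Q a b"
proof -
  have s: "sgn (c * k) \<noteq> 0" using assms by (simp add: sgn_0_0)
  have "{x. a < x \<and> x < b \<and> Ind_pt (Polynomial.smult c P) (Polynomial.smult k Q) x \<noteq> 0}
      = {x. a < x \<and> x < b \<and> Ind_pt P Q x \<noteq> 0}"
    using s by (simp add: Ind_pt_scale[OF assms])
  then show ?thesis
    by (simp add: Ind_lt_def Ind_pt_scale[OF assms] Ind_plus_scale[OF assms] Ind_minus_scale[OF assms]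
        sum_distrib_left algebra_simps)
qed


definition tau :: "'a::linordered_field poly \<Rightarrow> 'a poly \<Rightarrow> 'a \<Rightarrow> 'a" where
  "tau P Q x = (if P \<noteq> 0 \<and> Q \<noteq> 0 \<and> order x P = order x Q
     then sgn (poly (cofac P x) x * poly (cofac Q x) x) else 0)"

lemma tau_sym: "tau P Q x = tau Q P x"
  by (auto simp: tau_def mult.commute)

lemma no_root_sgn:
  fixes G :: "'a::real_closed_field poly"
  assumes "x < y" "\<And>t. x \<le> t \<Longrightarrow> t \<le> y \<Longrightarrow> poly G t \<noteq> 0"
  shows "sgn (poly G x) = sgn (poly G y)"
proof (rule ccontr)
  assume ne: "sgn (poly G x) \<noteq> sgn (poly G y)"
  have nx: "poly G x \<noteq> 0" and ny: "poly G y \<noteq> 0" using assms by auto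
  have "poly G x * poly G y < 0"
    using ne nx ny by (cases "poly G x > 0"; cases "poly G y > 0")
      (auto simp: mult_pos_neg mult_neg_pos sgn_if)
  then obtain r where "x < r" "r < y" "poly G r = 0" using poly_ivt[OF assms(1)] by blast
  then show False using assms(2)[of r] by simp
qed

lemma sum_plus_tau:
  assumes "P \<noteq> 0" "Q \<noteq> 0"
  shows "Ind_plus P Q a + Ind_plus Q P a + tau P Q a / 2 = sgn (poly (cofac P a) a * poly (cofac Q a) a) / 2"
  using assms by (auto simp: Ind_plus_def tau_def mult.commute)

lemma neg1_pow_nat_diff:
  assumes "p < (q::nat)"
  shows "((-1::'a::comm_ring_1) ^ nat (int q - int p)) = (-1) ^ (p + q)"
proof -
  have n: "nat (int q - int p) = q - p" using assms by simp
  have e: "p + q = (q - p) + 2 * p" using assms by simp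
  have "(-1::'a) ^ (p + q) = (-1) ^ (q - p) * ((-1) ^ 2) ^ p"
    by (subst e) (simp only: power_add power_mult)
  then show ?thesis using n by simp
qed

lemma sum_minus_tau:
  assumes "P \<noteq> 0" "Q \<noteq> 0"
  shows "Ind_minus P Q b + Ind_minus Q P b + tau P Q b / 2
       = (-1) ^ (order b P + order b Q) * sgn (poly (cofac P b) b * poly (cofac Q b) b) / 2"
proof -
  consider "order b P < order b Q" | "order b Q < order b P" | "order b P = order b Q" by linarith
  then show ?thesis
  proof cases
    case 1
    then show ?thesis using assms neg1_pow_nat_diff[OF 1, where 'a='a]
      by (auto simp: Ind_minus_def tau_def)
  next
    case 2
    then show ?thesis using assms neg1_pow_nat_diff[OF 2, where 'a='a]
      by (auto simp: Ind_minus_def tau_def mult.commute add.commute)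
  next
    case 3
    then show ?thesis using assms by (auto simp: Ind_minus_def tau_def simp flip: mult_2 power_mult)
  qed
qed

lemma Ind_lt_zero_left: "Ind_lt 0 Q a b = 0"
  by (simp add: Ind_lt_def Ind_pt_def Ind_plus_def Ind_minus_def)
lemma Ind_lt_zero_right: "Ind_lt P 0 a b = 0"
  by (simp add: Ind_lt_def Ind_pt_def Ind_plus_def Ind_minus_def)

lemma Ind_lt_noroots:
  assumes "\<And>x. a < x \<Longrightarrow> x < b \<Longrightarrow> poly Q x \<noteq> 0"
  shows "Ind_lt P Q a b = Ind_plus P Q a - Ind_minus P Q b"
proof -
  have "{x. a < x \<and> x < b \<and> Ind_pt P Q x \<noteq> 0} = {}" using assms Ind_pt_root by blast
  then show ?thesis by (simp add: Ind_lt_def)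
qed

lemma boundary_base:
  fixes P Q :: "'a::real_closed_field poly"
  assumes P0: "P \<noteq> 0" and Q0: "Q \<noteq> 0" and ab: "a < b"
    and nr: "\<And>x. a < x \<Longrightarrow> x < b \<Longrightarrow> poly (P * Q) x \<noteq> 0"
  shows "Ind_lt P Q a b + Ind_lt Q P a b = (tau P Q b - tau P Q a) / 2"
proof -
  have nQ: "poly Q x \<noteq> 0" and nP: "poly P x \<noteq> 0" if "a < x" "x < b" for x using nr[OF that] by auto
  have e1: "Ind_lt P Q a b = Ind_plus P Q a - Ind_minus P Q b" by (rule Ind_lt_noroots) (use nQ in auto)
  have e2: "Ind_lt Q P a b = Ind_plus Q P a - Ind_minus Q P b" by (rule Ind_lt_noroots) (use nP in auto)
  let ?X = "\<lambda>x. [:-x,1:]"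
  define Ga where "Ga = cofac P a * cofac Q a"
  define Gb where "Gb = cofac P b * cofac Q b"
  define ka where "ka = order a P + order a Q"
  define kb where "kb = order b P + order b Q"
  have Ra: "P * Q = ?X a ^ ka * Ga"
    using cofac_decomp(1)[OF P0, of a] cofac_decomp(1)[OF Q0, of a] unfolding Ga_def ka_def
    by (metis (no_types, lifting) mult.assoc mult.left_commute power_add)
  have Rb: "P * Q = ?X b ^ kb * Gb"
    using cofac_decomp(1)[OF P0, of b] cofac_decomp(1)[OF Q0, of b] unfolding Gb_def kb_def
    by (metis (no_types, lifting) mult.assoc mult.left_commute power_add)
  have Ga0: "poly Ga a \<noteq> 0" using cofac_decomp(2)[OF P0] cofac_decomp(2)[OF Q0] by (simp add: Ga_def)
  have Gb0: "poly Gb b \<noteq> 0" using cofac_decomp(2)[OF P0] cofac_decomp(2)[OF Q0] by (simp add: Gb_def)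
  define m where "m = (a + b) / 2"
  have m: "a < m" "m < b" using ab by (auto simp: m_def field_simps)
  have sa: "sgn (poly Ga a) = sgn (poly Ga m)"
  proof (rule no_root_sgn[OF m(1)])
    fix t assume t: "a \<le> t" "t \<le> m"
    show "poly Ga t \<noteq> 0"
    proof (cases "t = a")
      case False
      then have "poly (P * Q) t \<noteq> 0" using nr t m by auto
      then show ?thesis using Ra by (metis mult_zero_right poly_mult)
    qed (use Ga0 in simp)
  qed
  have sb: "sgn (poly Gb m) = sgn (poly Gb b)"
  proof (rule no_root_sgn[OF m(2)])
    fix t assume t: "m \<le> t" "t \<le> b"
    show "poly Gb t \<noteq> 0"
    proof (cases "t = b")
      case False
      then have "poly (P * Q) t \<noteq> 0" using nr t m by auto
      then show ?thesis using Rb by (metis mult_zero_right poly_mult)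
    qed (use Gb0 in simp)
  qed
  have "sgn (poly (P * Q) m) = sgn ((m - a) ^ ka) * sgn (poly Ga m)"
    using Ra by (simp add: sgn_mult)
  also have "sgn ((m - a) ^ ka) = 1" using m by (simp add: power_sgn)
  finally have A: "sgn (poly (P * Q) m) = sgn (poly Ga a)" using sa by simp
  have "sgn (poly (P * Q) m) = sgn ((m - b) ^ kb) * sgn (poly Gb m)"
    using Rb by (simp add: sgn_mult)
  also have "sgn ((m - b) ^ kb) = (-1) ^ kb" using m by (simp add: power_sgn)
  finally have B: "sgn (poly (P * Q) m) = (-1) ^ kb * sgn (poly Gb b)" using sb by simp
  have "Ind_lt P Q a b + Ind_lt Q P a b - (tau P Q b - tau P Q a) / 2
      = (Ind_plus P Q a + Ind_plus Q P a + tau P Q a / 2) - (Ind_minus P Q b + Ind_minus Q P b + tau P Q b / 2)"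
    unfolding e1 e2 by (simp add: field_simps)
  also have "\<dots> = sgn (poly Ga a) / 2 - (-1) ^ kb * sgn (poly Gb b) / 2"
    unfolding sum_plus_tau[OF P0 Q0] sum_minus_tau[OF P0 Q0] Ga_def Gb_def kb_def
    by (simp add: sgn_mult)
  also have "\<dots> = 0" using A B by simp
  finally show ?thesis by simp
qed

lemma Ind_boundary:
  fixes P Q :: "'a::real_closed_field poly"
  assumes ab: "a < b"
  shows "Ind_lt P Q a b + Ind_lt Q P a b = (tau P Q b - tau P Q a) / 2"
proof (cases "P = 0 \<or> Q = 0")
  case True
  then show ?thesis by (auto simp: Ind_lt_zero_left Ind_lt_zero_right tau_def)
next
  case False
  then have P0: "P \<noteq> 0" and Q0: "Q \<noteq> 0" by auto
  have R0: "P * Q \<noteq> 0" using P0 Q0 by simp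
  define K where "K a b = Ind_lt P Q a b + Ind_lt Q P a b - (tau P Q b - tau P Q a) / 2" for a b
  have Ksplit: "K a b = K a c + K c b" if "a < c" "c < b" for a b c
    unfolding K_def using Ind_lt_split[OF that, of P Q] Ind_lt_split[OF that, of Q P]
    by (simp add: field_simps)
  define Z where "Z a b = {x. a < x \<and> x < b \<and> poly (P * Q) x = 0}" for a b
  have finZ: "finite (Z a b)" for a b
    by (rule finite_subset[OF _ poly_roots_finite[OF R0]]) (auto simp: Z_def)
  have "\<forall>a b. a < b \<longrightarrow> card (Z a b) = n \<longrightarrow> K a b = 0" for n
  proof (induction n rule: less_induct)
    case (less n)
    show ?case
    proof (intro allI impI)
      fix a b assume ab: "a < b" and cn: "card (Z a b) = n"
      show "K a b = 0"
      proof (cases "Z a b = {}")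
        case True
        then have "\<And>x. a < x \<Longrightarrow> x < b \<Longrightarrow> poly (P * Q) x \<noteq> 0" by (auto simp: Z_def)
        then show ?thesis using boundary_base[OF P0 Q0 ab] unfolding K_def by simp
      next
        case False
        then obtain c where c: "c \<in> Z a b" by blast
        then have ac: "a < c" "c < b" by (auto simp: Z_def)
        have s1: "Z a c \<subset> Z a b" using c ac by (auto simp: Z_def)
        have s2: "Z c b \<subset> Z a b" using c ac by (auto simp: Z_def)
        have "card (Z a c) < n" using psubset_card_mono[OF finZ s1] cn by simp
        then have "K a c = 0" using less.IH ac(1) by blast
        moreover have "card (Z c b) < n" using psubset_card_mono[OF finZ s2] cn by simp
        then have "K c b = 0" using less.IH ac(2) by blast
        ultimately show ?thesis using Ksplit[OF ac] by simp
      qed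
    qed
  qed
  then have "K a b = 0" using ab by blast
  then show ?thesis unfolding K_def by simp
qed


definition rPhi :: "'a::linordered_field \<Rightarrow> 'a \<Rightarrow> 'a poly \<Rightarrow> 'a poly \<Rightarrow> 'a \<Rightarrow> 'a" where
  "rPhi c d P Q x = (tau (Polynomial.smult c P - Polynomial.smult d Q) (Polynomial.smult d P + Polynomial.smult c Q) x
      - 2 * tau (P - Polynomial.smult (d / c) Q) Q x + tau P Q x) / 2"

lemma edge_rot:
  fixes P Q :: "'a::real_closed_field poly" and c d :: 'a
  assumes c0: "c \<noteq> 0" and ab: "a < b"
  defines "P' \<equiv> Polynomial.smult c P - Polynomial.smult d Q"
    and "Q' \<equiv> Polynomial.smult d P + Polynomial.smult c Q"
  shows "(Ind_lt P' Q' a b - Ind_lt Q' P' a b) - (Ind_lt P Q a b - Ind_lt Q P a b)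
       = rPhi c d P Q b - rPhi c d P Q a"
proof -
  define s where "s = d / c"
  define k where "k = (c * c + d * d) / c"
  define U where "U = P - Polynomial.smult s Q"
  have cs: "c * s = d" using c0 by (simp add: s_def)
  have kc: "k * c > 0" using c0 by (simp add: k_def sum_squares_gt_zero_iff)
  have k0: "k \<noteq> 0" using kc by auto
  have P'U: "P' = Polynomial.smult c U"
    unfolding P'_def U_def by (simp add: smult_diff_right cs)
  have Q'e: "Q' = Polynomial.smult k Q + Polynomial.smult s P'"
  proof -
    have "k - s * d = c" using c0 by (simp add: k_def s_def field_simps)
    then have "Polynomial.smult k Q + Polynomial.smult s P' = Polynomial.smult d P + Polynomial.smult (k - s * d) Q"
      unfolding P'_def using cs by (simp add: smult_diff_right smult_diff_left algebra_simps)
    then show ?thesis unfolding Q'_def using \<open>k - s * d = c\<close> by simp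
  qed
  have i1: "Ind_lt Q' P' a b = Ind_lt Q U a b"
  proof -
    have "Ind_lt Q' P' a b = Ind_lt (Polynomial.smult k Q) P' a b"
      unfolding Q'e by (rule Ind_lt_shear)
    also have "\<dots> = Ind_lt (Polynomial.smult k Q) (Polynomial.smult c U) a b" by (simp add: P'U)
    also have "\<dots> = sgn (k * c) * Ind_lt Q U a b" by (rule Ind_lt_scale[OF k0 c0])
    finally show ?thesis using kc by simp
  qed
  have i2: "Ind_lt U Q a b = Ind_lt P Q a b"
    unfolding U_def using Ind_lt_shear[of P "- s" Q a b] by simp
  have b1: "Ind_lt Q U a b + Ind_lt U Q a b = (tau U Q b - tau U Q a) / 2"
    using Ind_boundary[OF ab, of Q U] tau_sym[of Q U] by simp
  have b2: "Ind_lt P' Q' a b + Ind_lt Q' P' a b = (tau P' Q' b - tau P' Q' a) / 2"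
    by (rule Ind_boundary[OF ab])
  have b3: "Ind_lt P Q a b + Ind_lt Q P a b = (tau P Q b - tau P Q a) / 2"
    by (rule Ind_boundary[OF ab])
  show ?thesis
    unfolding rPhi_def P'_def[symmetric] Q'_def[symmetric] s_def[symmetric] U_def[symmetric]
    using i1 i2 b1 b2 b3 by (simp add: field_simps)
qed

lemma tau_factor:
  fixes U V :: "'a::linordered_field poly"
  assumes P: "P = [:-x,1:]^m * U" and Q: "Q = [:-x,1:]^m * V"
    and nz: "poly U x \<noteq> 0 \<or> poly V x \<noteq> 0"
  shows "tau P Q x = sgn (poly U x * poly V x)"
proof (cases "poly U x \<noteq> 0 \<and> poly V x \<noteq> 0")
  case True
  then show ?thesis using order_cofac_char[OF P] order_cofac_char[OF Q] by (simp add: tau_def)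
next
  case False
  show ?thesis
  proof (cases "poly U x = 0")
    case True
    then have V: "poly V x \<noteq> 0" using nz by simp
    have oq: "order x Q = m" using order_cofac_char[OF Q V] by simp
    have "P = 0 \<or> order x P \<noteq> m"
    proof (cases "U = 0")
      case False
      have "order x U > 0" using True False order_gt_0_iff by blast
      moreover have "P \<noteq> 0" using P False by simp
      ultimately have "order x P = m + order x U"
        using P order_mult[of "[:-x,1:]^m" U x] order_power_n_n by simp
      then show ?thesis using \<open>order x U > 0\<close> by simp
    qed (simp add: P)
    then show ?thesis using oq True by (auto simp: tau_def)
  next
    case False
    then have V: "poly V x = 0" using \<open>\<not> (poly U x \<noteq> 0 \<and> poly V x \<noteq> 0)\<close> by simp
    have U: "poly U x \<noteq> 0" using False by simp
    have op: "order x P = m" using order_cofac_char[OF P U] by simp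
    have "Q = 0 \<or> order x Q \<noteq> m"
    proof (cases "V = 0")
      case False
      have "order x V > 0" using V False order_gt_0_iff by blast
      moreover have "Q \<noteq> 0" using Q False by simp
      ultimately have "order x Q = m + order x V"
        using Q order_mult[of "[:-x,1:]^m" V x] order_power_n_n by simp
      then show ?thesis using \<open>order x V > 0\<close> by simp
    qed (simp add: Q)
    then show ?thesis using op V by (auto simp: tau_def)
  qed
qed

definition phiw :: "'a::linordered_field \<Rightarrow> 'a \<Rightarrow> 'a \<Rightarrow> 'a \<Rightarrow> 'a" where
  "phiw c d p q = (sgn ((c * p - d * q) * (d * p + c * q)) - 2 * sgn ((p - d / c * q) * q) + sgn (p * q)) / 2"

lemma rPhi_factor:
  fixes U V :: "'a::linordered_field poly"
  assumes c0: "c \<noteq> 0"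
    and P: "P = [:-x,1:]^m * U" and Q: "Q = [:-x,1:]^m * V"
    and nz: "poly U x \<noteq> 0 \<or> poly V x \<noteq> 0"
  shows "rPhi c d P Q x = phiw c d (poly U x) (poly V x)"
proof -
  let ?X = "[:-x,1:]^m"
  have t1: "tau (Polynomial.smult c P - Polynomial.smult d Q) (Polynomial.smult d P + Polynomial.smult c Q) x
      = sgn (poly (Polynomial.smult c U - Polynomial.smult d V) x * poly (Polynomial.smult d U + Polynomial.smult c V) x)"
  proof (rule tau_factor)
    show "Polynomial.smult c P - Polynomial.smult d Q = ?X * (Polynomial.smult c U - Polynomial.smult d V)"
      using P Q by (simp add: algebra_simps)
    show "Polynomial.smult d P + Polynomial.smult c Q = ?X * (Polynomial.smult d U + Polynomial.smult c V)"
      using P Q by (simp add: algebra_simps)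
    show "poly (Polynomial.smult c U - Polynomial.smult d V) x \<noteq> 0 \<or>
          poly (Polynomial.smult d U + Polynomial.smult c V) x \<noteq> 0"
    proof (rule ccontr)
      assume "\<not> ?thesis"
      then have e: "c * poly U x - d * poly V x = 0" "d * poly U x + c * poly V x = 0" by auto
      have "(c * c + d * d) * poly U x = c * (c * poly U x - d * poly V x) + d * (d * poly U x + c * poly V x)"
        by (simp add: algebra_simps)
      then have "(c * c + d * d) * poly U x = 0" using e by simp
      moreover have "(c * c + d * d) * poly V x = c * (d * poly U x + c * poly V x) - d * (c * poly U x - d * poly V x)"
        by (simp add: algebra_simps)
      then have "(c * c + d * d) * poly V x = 0" using e by simp
      moreover have "c * c + d * d \<noteq> 0" using c0 by (simp add: sum_squares_eq_zero_iff)
      ultimately show False using nz by (metis mult_eq_0_iff)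
    qed
  qed
  have t2: "tau (P - Polynomial.smult (d / c) Q) Q x = sgn (poly (U - Polynomial.smult (d / c) V) x * poly V x)"
  proof (rule tau_factor)
    show "P - Polynomial.smult (d / c) Q = ?X * (U - Polynomial.smult (d / c) V)"
      using P Q by (simp add: algebra_simps)
    show "Q = ?X * V" by (rule Q)
    show "poly (U - Polynomial.smult (d / c) V) x \<noteq> 0 \<or> poly V x \<noteq> 0" using nz by auto
  qed
  have t3: "tau P Q x = sgn (poly U x * poly V x)" by (rule tau_factor[OF P Q nz])
  show ?thesis unfolding rPhi_def phiw_def t1 t2 t3 by simp
qed

lemma sgn_key:
  fixes p q s :: "'a::linordered_field"
  shows "(sgn p - sgn (p - s * q)) * (sgn (q + s * p) - sgn q) = 0"
proof -
  have "sgn (q + s * p) = sgn q" if ne: "sgn p \<noteq> sgn (p - s * q)"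
  proof -
    consider "p = 0" | "p > 0" | "p < 0" by linarith
    then show ?thesis
    proof cases
      case 1 then show ?thesis by simp
    next
      case 2
      then have "p - s * q \<le> 0" using ne by (auto simp: sgn_if split: if_splits)
      then have sq: "s * q > 0" using 2 by linarith
      then have "(s > 0 \<and> q > 0) \<or> (s < 0 \<and> q < 0)" by (simp add: zero_less_mult_iff)
      then show ?thesis
      proof
        assume a: "s > 0 \<and> q > 0"
        then have "s * p > 0" using 2 by simp
        then show ?thesis using a by (simp add: sgn_if)
      next
        assume a: "s < 0 \<and> q < 0"
        then have "s * p < 0" using 2 by (simp add: mult_neg_pos)
        then show ?thesis using a by (simp add: sgn_if)
      qed
    next
      case 3
      then have "p - s * q \<ge> 0" using ne by (auto simp: sgn_if split: if_splits)
      then have sq: "s * q < 0" using 3 by linarith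
      then have "(s > 0 \<and> q < 0) \<or> (s < 0 \<and> q > 0)" by (simp add: mult_less_0_iff)
      then show ?thesis
      proof
        assume a: "s > 0 \<and> q < 0"
        then have "s * p < 0" using 3 by (simp add: mult_pos_neg)
        then show ?thesis using a by (simp add: sgn_if)
      next
        assume a: "s < 0 \<and> q > 0"
        then have "s * p > 0" using 3 by (simp add: mult_neg_neg)
        then show ?thesis using a by (simp add: sgn_if)
      qed
    qed
  qed
  then show ?thesis by fastforce
qed

lemma phiw_rot:
  fixes c d p q :: "'a::linordered_field"
  assumes c0: "c \<noteq> 0"
  shows "phiw c d (- q) p = phiw c d p q"
proof -
  define s where "s = d / c"
  have d: "d = c * s" using c0 by (simp add: s_def)
  have e1: "sgn ((c * - q - d * p) * (d * - q + c * p)) = - sgn ((p - s * q) * (q + s * p))"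
  proof -
    have "(c * - q - d * p) * (d * - q + c * p) = - ((c * c) * ((p - s * q) * (q + s * p)))"
      unfolding d by (simp add: algebra_simps)
    moreover have "c * c > 0" using c0 by (cases "c > 0") (auto intro: mult_pos_pos mult_neg_neg)
    ultimately show ?thesis using c0 by (simp add: sgn_mult)
  qed
  have e2: "sgn ((c * p - d * q) * (d * p + c * q)) = sgn ((p - s * q) * (q + s * p))"
  proof -
    have "(c * p - d * q) * (d * p + c * q) = (c * c) * ((p - s * q) * (q + s * p))"
      unfolding d by (simp add: algebra_simps)
    moreover have "c * c > 0" using c0 by (cases "c > 0") (auto intro: mult_pos_pos mult_neg_neg)
    ultimately show ?thesis using c0 by (simp add: sgn_mult)
  qed
  define A where "A = sgn (p - s * q)"
  define B where "B = sgn (q + s * p)"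
  have h: "- q - s * p = - (q + s * p)" by simp
  have L: "phiw c d p q = (A * B - 2 * (A * sgn q) + sgn p * sgn q) / 2"
    unfolding phiw_def s_def[symmetric] e2 A_def B_def by (simp only: sgn_mult)
  have R: "phiw c d (- q) p = (- (A * B) - 2 * (- B * sgn p) + (- sgn q) * sgn p) / 2"
    unfolding phiw_def s_def[symmetric] e1 A_def B_def h by (simp only: sgn_mult Rings.sgn_minus)
  have key: "B * sgn p + A * sgn q = A * B + sgn p * sgn q"
    using sgn_key[of p s q] unfolding A_def B_def by (simp add: algebra_simps)
  show ?thesis unfolding L R using key by (simp add: field_simps)
qed


section \<open>Complexification of pairs of polynomials\<close>

definition toC :: "'a::comm_ring_1 poly \<times> 'a poly \<Rightarrow> 'a cpx poly" where
  "toC z = map_poly ofR (fst z) + Polynomial.smult ii (map_poly ofR (snd z))"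

lemma ii_ii_mult [simp]: "ii * (ii * x) = - (x :: 'a::comm_ring_1 cpx)"
  by (simp add: cpx_eq_iff)

lemma coeff_toC: "coeff (toC z) i = Cpx (coeff (fst z) i) (coeff (snd z) i)"
  by (simp add: toC_def cpx_eq_iff)

lemma fst_toC: "map_poly cre (toC z) = fst z"
  by (rule poly_eqI) (simp add: coeff_map_poly coeff_toC)

lemma snd_toC: "map_poly cim (toC z) = snd z"
  by (rule poly_eqI) (simp add: coeff_map_poly coeff_toC)

lemma toC_inj: "toC z = toC w \<Longrightarrow> z = w"
  by (metis fst_toC snd_toC prod_eq_iff)

lemma toC_zero_iff: "toC z = 0 \<longleftrightarrow> z = (0, 0)"
proof
  assume "toC z = 0"
  then have "toC z = toC (0,0)" by (simp add: toC_def)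
  then show "z = (0,0)" by (rule toC_inj)
qed (simp add: toC_def)

lemma toC_decomp: "toC (map_poly cre R, map_poly cim R) = R"
  by (rule poly_eqI) (simp add: coeff_toC coeff_map_poly cpx_eq_iff)

lemma toC_pair_mult:
  "toC (A1 * A2 - B1 * B2, A1 * B2 + B1 * A2) = toC (A1, B1) * toC (A2, B2)"
  by (simp add: toC_def ofRp.hom_mult ofRp.hom_add ofRp.hom_minus algebra_simps
      mult_smult_left mult_smult_right smult_add_right)

lemma toC_cmul: "toC (cmul z w) = toC z * toC w"
  using toC_pair_mult[of "fst z" "fst w" "snd z" "snd w"] by (simp add: cmul_def)

interpretation cnjh: comm_ring_hom "cnj :: 'a::comm_ring_1 cpx \<Rightarrow> 'a cpx"
  by unfold_locales simp_all

interpretation cnjp: map_poly_comm_ring_hom "cnj :: 'a::comm_ring_1 cpx \<Rightarrow> 'a cpx" ..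

lemma map_cnj_ofR: "map_poly cnj (map_poly ofR p) = map_poly ofR p"
  by (rule poly_eqI) (simp add: coeff_map_poly)

lemma toC_cconj: "toC (cconj z) = map_poly cnj (toC z)"
  by (simp add: toC_def cconj_def cnjp.hom_add cnjh.map_poly_hom_smult map_cnj_ofR ofRp.hom_uminus)

lemma toC_times_i: "toC (times_i z) = Polynomial.smult ii (toC z)"
  by (simp add: toC_def times_i_def ofRp.hom_uminus algebra_simps smult_add_right)

lemma toC_rot:
  "toC (Polynomial.smult c A - Polynomial.smult d B, Polynomial.smult d A + Polynomial.smult c B)
   = Polynomial.smult (Cpx c d) (toC (A, B))"
proof -
  have e: "Cpx c d = ofR c + ii * ofR d" by (simp add: cpx_eq_iff)
  show ?thesis unfolding e
    by (simp add: toC_def ofRp.hom_add ofRp.hom_minus ofRh.map_poly_hom_smult algebra_simps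
        smult_add_right smult_add_left smult_diff_right smult_diff_left)
qed

lemma toC_realmult: "toC (L * U, L * V) = map_poly ofR L * toC (U, V)"
  by (simp add: toC_def ofRp.hom_mult algebra_simps mult_smult_right)

lemma poly_toC_real: "poly (toC (U, V)) (ofR x) = Cpx (poly U x) (poly V x)"
  by (simp add: toC_def ofRh.poly_map_poly cpx_eq_iff)

lemma toC_constpair: "toC (A + X, Y) = map_poly ofR A + toC (X, Y)"
  by (simp add: toC_def ofRp.hom_add)

lemma ceval_pCons:
  "ceval (pCons a p) z = ([:a:] + fst (cmul z (ceval p z)), snd (cmul z (ceval p z)))"
proof (cases "a = 0 \<and> p = 0")
  case True
  then show ?thesis by (simp add: ceval_def cmul_def)
next
  case False
  then show ?thesis unfolding ceval_def by (auto simp: fold_coeffs_pCons_not_0_0_eq)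
qed

lemma toC_ceval: "toC (ceval p z) = pcompose (map_poly ofR p) (toC z)"
proof (induct p)
  case 0
  then show ?case by (simp add: ceval_def toC_def)
next
  case (pCons a p)
  have "toC (ceval (pCons a p) z) = map_poly ofR [:a:] + toC (cmul z (ceval p z))"
    unfolding ceval_pCons by (simp add: toC_constpair)
  also have "\<dots> = [:ofR a:] + toC z * pcompose (map_poly ofR p) (toC z)"
    using pCons(2) by (simp add: toC_cmul ofRh.map_poly_pCons_hom)
  also have "\<dots> = pcompose (map_poly ofR (pCons a p)) (toC z)"
    by (simp add: ofRh.map_poly_pCons_hom pcompose_pCons)
  finally show ?case .
qed

lemma toC_restr: "toC (restr F z) = pcompose (toC F) (toC z)"
proof -
  obtain A1 A2 where A: "ceval (fst F) z = (A1, A2)" by fastforce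
  obtain B1 B2 where B: "ceval (snd F) z = (B1, B2)" by fastforce
  have "toC (restr F z) = toC (A1, A2) + Polynomial.smult ii (toC (B1, B2))"
    unfolding restr_def Let_def A B
    by (simp add: toC_def ofRp.hom_add ofRp.hom_minus algebra_simps smult_add_right)
  also have "\<dots> = pcompose (toC F) (toC z)"
    using toC_ceval[of "fst F" z] toC_ceval[of "snd F" z] unfolding A B
    by (simp add: toC_def pcompose_add pcompose_smult)
  finally show ?thesis .
qed

lemma toC_cscale: "toC (cscale g F) = Polynomial.smult (Cpx (fst g) (snd g)) (toC F)"
  using toC_rot[of "fst g" "fst F" "snd g" "snd F"] by (simp add: cscale_def add.commute)


section \<open>Corners\<close>

lemma ii_neq_0 [simp]: "(ii :: 'a::comm_ring_1 cpx) \<noteq> 0"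
  by (simp add: cpx_eq_iff)

lemma pcompose_power_left: "pcompose (p ^ n) q = (pcompose p q) ^ n"
  by (induct n) (simp_all add: pcompose_mult pcompose_1)

lemma phiw_ii_pow:
  fixes w :: "'a::linordered_field cpx"
  assumes "c \<noteq> 0"
  shows "phiw c d (cre (ii ^ n * w)) (cim (ii ^ n * w)) = phiw c d (cre w) (cim w)"
proof (induct n)
  case 0 then show ?case by simp
next
  case (Suc n)
  have "phiw c d (cre (ii ^ Suc n * w)) (cim (ii ^ Suc n * w))
      = phiw c d (- cim (ii ^ n * w)) (cre (ii ^ n * w))"
    by (simp add: mult.assoc)
  also have "\<dots> = phiw c d (cre (ii ^ n * w)) (cim (ii ^ n * w))" by (rule phiw_rot[OF assms])
  finally show ?case using Suc by simp
qed

lemma minus_ii_pow: "(- ii :: 'a::comm_ring_1 cpx) ^ b = ii ^ (3 * b)"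
proof -
  have "(- ii :: 'a cpx) = ii ^ 3" by (simp add: cpx_eq_iff numeral_3_eq_3)
  then show ?thesis by (simp add: power_mult)
qed

lemma real_factor_pair:
  fixes R :: "'a::linordered_field cpx poly"
  assumes "toC z = map_poly ofR L * R"
  shows "z = (L * map_poly cre R, L * map_poly cim R)"
proof -
  have "toC z = toC (L * map_poly cre R, L * map_poly cim R)"
    using assms by (simp add: toC_realmult toC_decomp)
  then show ?thesis by (rule toC_inj)
qed

lemma poly_cre_cim:
  fixes R :: "'a::linordered_field cpx poly"
  shows "Cpx (poly (map_poly cre R) x) (poly (map_poly cim R) x) = poly R (ofR x)"
  using poly_toC_real[of "map_poly cre R" "map_poly cim R" x] toC_decomp[of R] by simp

lemma rPhi_at:
  fixes R :: "'a::linordered_field cpx poly"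
  assumes c0: "c \<noteq> 0" and z: "toC z = map_poly ofR ([:-x,1:]^k) * R" and w: "poly R (ofR x) \<noteq> 0"
  shows "rPhi c d (fst z) (snd z) x = phiw c d (cre (poly R (ofR x))) (cim (poly R (ofR x)))"
proof -
  have zz: "z = ([:-x,1:]^k * map_poly cre R, [:-x,1:]^k * map_poly cim R)"
    by (rule real_factor_pair[OF z])
  have pc: "Cpx (poly (map_poly cre R) x) (poly (map_poly cim R) x) = poly R (ofR x)"
    by (rule poly_cre_cim)
  have nz: "poly (map_poly cre R) x \<noteq> 0 \<or> poly (map_poly cim R) x \<noteq> 0"
    using w pc by (metis zero_cpx_def)
  have "rPhi c d (fst z) (snd z) x = phiw c d (poly (map_poly cre R) x) (poly (map_poly cim R) x)"
  proof -
    have "rPhi c d ([:-x,1:]^k * map_poly cre R) ([:-x,1:]^k * map_poly cim R) x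
        = phiw c d (poly (map_poly cre R) x) (poly (map_poly cim R) x)"
      by (rule rPhi_factor[where m=k, OF c0 _ _ nz]) simp_all
    moreover have "fst z = [:-x,1:]^k * map_poly cre R" "snd z = [:-x,1:]^k * map_poly cim R"
      using zz by (metis fst_conv, metis snd_conv)
    ultimately show ?thesis by simp
  qed
  also have "\<dots> = phiw c d (cre (poly R (ofR x))) (cim (poly R (ofR x)))"
    by (simp flip: pc)
  finally show ?thesis .
qed

definition Hfr :: "'a::comm_ring_1 poly \<times> 'a poly \<Rightarrow> 'a poly \<times> 'a poly \<Rightarrow> 'a poly \<times> 'a poly \<Rightarrow> 'a poly \<times> 'a poly" where
  "Hfr F G z = cmul (restr F z) (cconj (restr G z))"

lemma toC_Hfr: "toC (Hfr F G z) = pcompose (toC F) (toC z) * map_poly cnj (pcompose (toC G) (toC z))"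
  by (simp add: Hfr_def toC_cmul toC_restr toC_cconj)

lemma corner:
  fixes F G :: "'a::real_closed_field poly \<times> 'a poly"
  assumes F0: "toC F \<noteq> 0" and G0: "toC G \<noteq> 0" and c0: "c \<noteq> 0"
  shows "rPhi c d (fst (Hfr F G ([:0,1:], [:y:]))) (snd (Hfr F G ([:0,1:], [:y:]))) x
       = rPhi c d (fst (Hfr F G ([:x:], [:0,1:]))) (snd (Hfr F G ([:x:], [:0,1:]))) y"
proof -
  define z0 where "z0 = Cpx x y"
  define a where "a = order z0 (toC F)"
  define b where "b = order z0 (toC G)"
  define F1 where "F1 = cofac (toC F) z0"
  define G1 where "G1 = cofac (toC G) z0"
  have Fd: "toC F = [:-z0,1:]^a * F1" "poly F1 z0 \<noteq> 0"
    using cofac_decomp[OF F0, of z0] unfolding a_def F1_def by auto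
  have Gd: "toC G = [:-z0,1:]^b * G1" "poly G1 z0 \<noteq> 0"
    using cofac_decomp[OF G0, of z0] unfolding b_def G1_def by auto
  define w where "w = poly F1 z0 * cnj (poly G1 z0)"
  have w0: "w \<noteq> 0" using Fd(2) Gd(2) by (simp add: w_def)
  define Lh :: "'a cpx poly" where "Lh = [:Cpx 0 y, 1:]"
  define Lv :: "'a cpx poly" where "Lv = [:Cpx x 0, ii:]"
  have tLh: "toC ([:0,1:], [:y:]) = Lh"
    by (rule poly_eqI) (auto simp: coeff_toC Lh_def coeff_pCons cpx_eq_iff split: nat.split)
  have tLv: "toC ([:x:], [:0,1:]) = Lv"
    by (rule poly_eqI) (auto simp: coeff_toC Lv_def coeff_pCons cpx_eq_iff split: nat.split)
  define Mx :: "'a cpx poly" where "Mx = map_poly ofR [:-x,1:]"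
  define My :: "'a cpx poly" where "My = map_poly ofR [:-y,1:]"
  have Mx: "Mx = [:- ofR x, 1:]" by (simp add: Mx_def ofRh.map_poly_pCons_hom)
  have My: "My = [:- ofR y, 1:]" by (simp add: My_def ofRh.map_poly_pCons_hom)
  have ch: "pcompose [:-z0,1:] Lh = Mx"
    by (simp add: pcompose_pCons Lh_def Mx z0_def cpx_eq_iff)
  have cv: "pcompose [:-z0,1:] Lv = Polynomial.smult ii My"
    by (simp add: pcompose_pCons Lv_def My z0_def cpx_eq_iff)
  have cMx: "map_poly cnj Mx = Mx" by (simp add: Mx_def map_cnj_ofR)
  have cMy: "map_poly cnj My = My" by (simp add: My_def map_cnj_ofR)
  have pLh: "poly Lh (ofR x) = z0" by (simp add: Lh_def z0_def cpx_eq_iff)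
  have pLv: "poly Lv (ofR y) = z0" by (simp add: Lv_def z0_def cpx_eq_iff)
  have cnjpoly: "poly (map_poly cnj P) (ofR t) = cnj (poly P (ofR t))" for P :: "'a cpx poly" and t
    using cnjh.poly_map_poly[of P "ofR t"] by simp
  define Rh where "Rh = pcompose F1 Lh * map_poly cnj (pcompose G1 Lh)"
  have th: "toC (Hfr F G ([:0,1:], [:y:])) = map_poly ofR ([:-x,1:]^(a+b)) * Rh"
  proof -
    have "toC (Hfr F G ([:0,1:], [:y:])) = (Mx^a * pcompose F1 Lh) * map_poly cnj (Mx^b * pcompose G1 Lh)"
      unfolding toC_Hfr tLh Fd(1) Gd(1) pcompose_mult pcompose_power_left ch by simp
    also have "\<dots> = Mx^(a+b) * Rh"
      by (simp add: Rh_def cnjp.hom_mult cnjp.hom_power cMx power_add algebra_simps)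
    finally show ?thesis by (simp add: Mx_def ofRp.hom_power)
  qed
  have wh: "poly Rh (ofR x) = w"
    by (simp add: Rh_def poly_pcompose pLh cnjpoly w_def)
  define Rv where "Rv = Polynomial.smult (ii ^ a * (- ii) ^ b) (pcompose F1 Lv * map_poly cnj (pcompose G1 Lv))"
  have tv: "toC (Hfr F G ([:x:], [:0,1:])) = map_poly ofR ([:-y,1:]^(a+b)) * Rv"
  proof -
    have "toC (Hfr F G ([:x:], [:0,1:]))
        = ((Polynomial.smult ii My)^a * pcompose F1 Lv) * map_poly cnj ((Polynomial.smult ii My)^b * pcompose G1 Lv)"
      unfolding toC_Hfr tLv Fd(1) Gd(1) pcompose_mult pcompose_power_left cv by simp
    also have "\<dots> = My^(a+b) * Rv"
      by (simp add: Rv_def cnjp.hom_mult cnjp.hom_power cMy power_add smult_power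
          cnjh.map_poly_hom_smult mult_smult_left mult_smult_right algebra_simps cnjh.hom_power)
    finally show ?thesis by (simp add: My_def ofRp.hom_power)
  qed
  have wv: "poly Rv (ofR y) = ii ^ (a + 3 * b) * w"
    by (simp add: Rv_def poly_pcompose pLv cnjpoly w_def minus_ii_pow power_add algebra_simps)
  have "rPhi c d (fst (Hfr F G ([:0,1:], [:y:]))) (snd (Hfr F G ([:0,1:], [:y:]))) x
      = phiw c d (cre w) (cim w)"
    using rPhi_at[OF c0 th] wh w0 by simp
  moreover have "rPhi c d (fst (Hfr F G ([:x:], [:0,1:]))) (snd (Hfr F G ([:x:], [:0,1:]))) y
      = phiw c d (cre (ii ^ (a + 3 * b) * w)) (cim (ii ^ (a + 3 * b) * w))"
    using rPhi_at[OF c0 tv] wv w0 by simp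
  ultimately show ?thesis using phiw_ii_pow[OF c0] by simp
qed


lemma Ind_lt_neg_left: "Ind_lt (- P) Q a b = - Ind_lt P Q a b"
proof -
  have "Ind_lt (Polynomial.smult (-1) P) (Polynomial.smult 1 Q) a b = sgn (-1 * 1) * Ind_lt P Q a b"
    by (rule Ind_lt_scale) simp_all
  then show ?thesis by simp
qed

lemma Ind_neg_left: "Ind (- P) Q a b = - Ind P Q a b"
  by (simp add: Ind_def Ind_lt_neg_left)

definition Jl :: "'a::linordered_field poly \<Rightarrow> 'a poly \<Rightarrow> 'a \<Rightarrow> 'a \<Rightarrow> 'a" where
  "Jl P Q a b = Ind_lt P Q a b - Ind_lt Q P a b"

lemma Wnd_expand:
  assumes x: "x0 < x1" and y: "y0 < y1"
  shows "Wnd x0 x1 y0 y1 H =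
    (Jl (fst (H ([:0,1:],[:y0:]))) (snd (H ([:0,1:],[:y0:]))) x0 x1
   + Jl (fst (H ([:x1:],[:0,1:]))) (snd (H ([:x1:],[:0,1:]))) y0 y1
   - Jl (fst (H ([:0,1:],[:y1:]))) (snd (H ([:0,1:],[:y1:]))) x0 x1
   - Jl (fst (H ([:x0:],[:0,1:]))) (snd (H ([:x0:],[:0,1:]))) y0 y1) / 4"
  unfolding Wnd_def wnd_def times_i_def Jl_def
  using x y by (simp add: Ind_neg_left Ind_lt_neg_left Ind_def field_simps)

lemma Jl_rot:
  fixes P Q :: "'a::real_closed_field poly"
  assumes "c \<noteq> 0" "a < b"
  shows "Jl (Polynomial.smult c P - Polynomial.smult d Q) (Polynomial.smult d P + Polynomial.smult c Q) a b
       = Jl P Q a b + (rPhi c d P Q b - rPhi c d P Q a)"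
  using edge_rot[OF assms, of P d Q] unfolding Jl_def by simp

lemma Jl_rot0:
  fixes P Q :: "'a::real_closed_field poly"
  assumes "d \<noteq> 0"
  shows "Jl (Polynomial.smult 0 P - Polynomial.smult d Q) (Polynomial.smult d P + Polynomial.smult 0 Q) a b
       = Jl P Q a b"
proof -
  have e: "Polynomial.smult 0 P - Polynomial.smult d Q = Polynomial.smult (- d) Q"
    "Polynomial.smult d P + Polynomial.smult 0 Q = Polynomial.smult d P" by simp_all
  have s: "sgn (- d * d) = -1" "sgn (d * - d) = -1" using assms
    by (simp_all add: sgn_mult sgn_if zero_less_mult_iff mult_less_0_iff)
  show ?thesis unfolding Jl_def e
    using Ind_lt_scale[of "- d" d Q P a b] Ind_lt_scale[of d "- d" P Q a b] assms s by simp
qed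

lemma Hfr_rot:
  "Hfr (cscale (c, d) F) G z =
     (Polynomial.smult c (fst (Hfr F G z)) - Polynomial.smult d (snd (Hfr F G z)),
      Polynomial.smult d (fst (Hfr F G z)) + Polynomial.smult c (snd (Hfr F G z)))"
proof (rule toC_inj)
  have "toC (Hfr (cscale (c, d) F) G z) = Polynomial.smult (Cpx c d) (toC (Hfr F G z))"
    by (simp add: toC_Hfr toC_cscale pcompose_smult mult_smult_left)
  also have "\<dots> = toC (Polynomial.smult c (fst (Hfr F G z)) - Polynomial.smult d (snd (Hfr F G z)),
      Polynomial.smult d (fst (Hfr F G z)) + Polynomial.smult c (snd (Hfr F G z)))"
    using toC_rot[of c "fst (Hfr F G z)" d "snd (Hfr F G z)"] by simp
  finally show "toC (Hfr (cscale (c, d) F) G z) = toC (Polynomial.smult c (fst (Hfr F G z)) - Polynomial.smult d (snd (Hfr F G z)),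
      Polynomial.smult d (fst (Hfr F G z)) + Polynomial.smult c (snd (Hfr F G z)))" .
qed

lemma Wnd_frac_Hfr: "Wnd_frac x0 x1 y0 y1 F G = Wnd x0 x1 y0 y1 (Hfr F G)"
  unfolding Wnd_frac_def Hfr_def[abs_def] ..

theorem lemma3p7:
  fixes Fa Fb Ga Gb :: "'a::real_closed_field poly"
    and gr gi x0 x1 y0 y1 :: "'a"
  assumes "(Fa, Fb) \<noteq> (0, 0)"
    and "(Ga, Gb) \<noteq> (0, 0)"
    and "(gr, gi) \<noteq> (0, 0)"
    and "x0 < x1" and "y0 < y1"
  shows "Wnd_frac x0 x1 y0 y1 (Fa, Fb) (Ga, Gb)
       = Wnd_frac x0 x1 y0 y1 (cscale (gr, gi) (Fa, Fb)) (Ga, Gb)"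
proof -
  define F where "F = (Fa, Fb)"
  define G where "G = (Ga, Gb)"
  have F0: "toC F \<noteq> 0" using assms(1) by (simp add: F_def toC_zero_iff)
  have G0: "toC G \<noteq> 0" using assms(2) by (simp add: G_def toC_zero_iff)
  let ?H = "Hfr F G"
  let ?H' = "Hfr (cscale (gr, gi) F) G"
  let ?e1 = "([:0,1:], [:y0:]) :: 'a poly \<times> 'a poly"
  let ?e2 = "([:x1:], [:0,1:]) :: 'a poly \<times> 'a poly"
  let ?e3 = "([:0,1:], [:y1:]) :: 'a poly \<times> 'a poly"
  let ?e4 = "([:x0:], [:0,1:]) :: 'a poly \<times> 'a poly"
  have W: "Wnd x0 x1 y0 y1 ?H' = Wnd x0 x1 y0 y1 ?H"
  proof (cases "gr = 0")
    case True
    then have gi: "gi \<noteq> 0" using assms(3) by simp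
    show ?thesis
      unfolding Wnd_expand[OF assms(4,5)] Hfr_rot True using Jl_rot0[OF gi] by simp
  next
    case False
    let ?R = "\<lambda>e t. rPhi gr gi (fst (?H e)) (snd (?H e)) t"
    have c1: "?R ([:0,1:], [:y0:]) x1 = ?R ([:x1:], [:0,1:]) y0" by (rule corner[OF F0 G0 False])
    have c2: "?R ([:0,1:], [:y0:]) x0 = ?R ([:x0:], [:0,1:]) y0" by (rule corner[OF F0 G0 False])
    have c3: "?R ([:0,1:], [:y1:]) x1 = ?R ([:x1:], [:0,1:]) y1" by (rule corner[OF F0 G0 False])
    have c4: "?R ([:0,1:], [:y1:]) x0 = ?R ([:x0:], [:0,1:]) y1" by (rule corner[OF F0 G0 False])
    show ?thesis
      unfolding Wnd_expand[OF assms(4,5)]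
      using c1 c2 c3 c4 by (simp add: Hfr_rot Jl_rot[OF False assms(4)] Jl_rot[OF False assms(5)] field_simps)
  qed
  show ?thesis unfolding Wnd_frac_Hfr F_def[symmetric] G_def[symmetric] using W by simp
qed

end
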